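(* Let $N>2$, $1<p<N$, and assume (H1)–(H4). For $a>0$ let $v_a$ be the solution on $[0,T]$ of $$(|v'(t)|^{p-2}v'(t))'+h(t)f(v(t))=0,\qquad v(0)=0,\ v'(0)=a.$$ Then for all sufficiently large $a$, $v_a$ has a first zero $z_a$ with $0<z_a<T$ (i.e. $v_a(z_a)=0$ and $v_a>0$ on $(0,z_a)$), and $z_a\to 0$ as $a\to\infty$.
   Context: Standing hypotheses. $f:\mathbb{R}\setminus\{0\}\to\mathbb{R}$ is odd and locally Lipschitz, and: (H1) there is a locally Lipschitz $g_1:\mathbb{R}\to\mathbb{R}$ and $l>p-1$ with $f(u)=|u|^{l-1}u+g_1(u)$ for all large $|u|$, and $\lim_{u\to\infty}|g_1(u)|/|u|^l=0$; (H2) there is a locally Lipschitz $g_2:\mathbb{R}\to\mathbb{R}$ with $g_2(0)=0$ and $0<m<1$ such that $f(u)=-\frac{1}{|u|^{m-1}u}+g_2(u)$ for all small $|u|\neq 0$; (H3) $f$ has a unique positive zero $\beta$, with $f<0$ on $(0,\beta)$ and $f>0$ on $(\beta,\infty)$; (H4) $K>0$ and $K'$ are continuous on $[R,\infty)$ (for a fixed $R>0$), $\frac{rK'(r)}{K(r)}>-\frac{(N-1)p}{p-1}$ on $[R,\infty)$, and there are constants $K_0,K_1>0$ with $\frac{K_0}{r^{\alpha}}\le K(r)\le \frac{K_1}{r^{\alpha_1}}$ on $[R,\infty)$, where $N+\frac{m(N-p)}{p-1}<\alpha_1\le\alpha<2(N-1)$. Notation: $T=R^{\frac{p-N}{p-1}}$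 and, for $0<t\le T$, $h(t)=\left(\frac{N-p}{p-1}\right)^{-p}t^{\frac{p(N-1)}{p-N}}K\!\left(t^{\frac{p-1}{p-N}}\right)>0$. A solution of the initial value problem on an interval $[0,d]$ means $v\in C^1[0,d]$ such that $t\mapsto h(t)f(v(t))$ is integrable on $(0,t)$ for each $t\le d$ and $|v'(t)|^{p-2}v'(t)=a^{p-1}-\int_0^t h(s)f(v(s))\,ds$, $v(0)=0$; it exists uniquely on $[0,T]$ for each $a>0$. *)

theory Defs
  imports "HOL-Analysis.Analysis"
begin

definition loc_lipschitz_on :: "real set \<Rightarrow> (real \<Rightarrow> real) \<Rightarrow> bool" where
  "loc_lipschitz_on S g \<longleftrightarrow>
     (\<forall>x\<in>S. \<exists>e>0. \<exists>L. L-lipschitz_on (cball x e \<inter> S) g)"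

definition T_of :: "real \<Rightarrow> real \<Rightarrow> real \<Rightarrow> real" where
  "T_of N p R = R powr ((p - N) / (p - 1))"

definition h_of :: "real \<Rightarrow> real \<Rightarrow> (real \<Rightarrow> real) \<Rightarrow> real \<Rightarrow> real" where
  "h_of N p K t = ((N - p) / (p - 1)) powr (- p) * t powr (p * (N - 1) / (p - N))
                  * K (t powr ((p - 1) / (p - N)))"

definition is_sol ::
  "real \<Rightarrow> (real \<Rightarrow> real) \<Rightarrow> (real \<Rightarrow> real) \<Rightarrow> real \<Rightarrow> real \<Rightarrow> (real \<Rightarrow> real) \<Rightarrow> bool" where
  "is_sol p h f a d v \<longleftrightarrow>
     (\<exists>v'. continuous_on {0..d} v' \<and>
        (\<forall>t\<in>{0..d}. (v has_real_derivative v' t) (at t within {0..d})) \<and>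
        v 0 = 0 \<and>
        (\<forall>t\<in>{0..d}. (\<lambda>s. h s * f (v s)) integrable_on {0..t} \<and>
           \<bar>v' t\<bar> powr (p - 2) * v' t = a powr (p - 1) - integral {0..t} (\<lambda>s. h s * f (v s))))"

end

theory Submission
  imports Defs "HOL-Real_Asymp.Real_Asymp"
begin

lemma cont_left_le:
  fixes g :: "real \<Rightarrow> real"
  assumes ab: "a < b" and cont: "continuous_on {a..b} g"
    and le: "\<And>t. a \<le> t \<Longrightarrow> t < b \<Longrightarrow> g t \<le> c"
  shows "g b \<le> c"
proof -
  have "(g \<longlongrightarrow> g b) (at b within {a..b})"
    using cont ab by (simp add: continuous_on_def)
  then have lim: "(g \<longlongrightarrow> g b) (at_left b)"
    using at_within_Icc_at_left[OF ab] by simp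
  have ev: "eventually (\<lambda>t. g t \<le> c) (at_left b)"
    unfolding eventually_at_left_field using ab le
    by (intro exI[of _ a]) auto
  show ?thesis
    by (rule tendsto_upperbound[OF lim ev]) (simp add: trivial_limit_at_left_real)
qed

lemma cont_left_ge:
  fixes g :: "real \<Rightarrow> real"
  assumes ab: "a < b" and cont: "continuous_on {a..b} g"
    and le: "\<And>t. a \<le> t \<Longrightarrow> t < b \<Longrightarrow> c \<le> g t"
  shows "c \<le> g b"
proof -
  have "(\<lambda>t. - g t) b \<le> - c"
    by (rule cont_left_le[OF ab]) (use cont le in \<open>auto intro: continuous_intros\<close>)
  then show ?thesis by simp
qed

definition psi :: "real \<Rightarrow> real \<Rightarrow> real" where
  "psi p g = sgn g * \<bar>g\<bar> powr (1 / (p - 1))"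

lemma psi_nonneg: "0 \<le> g \<Longrightarrow> psi p g = g powr (1 / (p - 1))"
  by (cases "g = 0") (auto simp: psi_def)

lemma psi_nonpos: "g \<le> 0 \<Longrightarrow> psi p g = - ((- g) powr (1 / (p - 1)))"
  by (cases "g = 0") (auto simp: psi_def)

lemma psi_phi:
  assumes p: "1 < p"
  shows "psi p (\<bar>y\<bar> powr (p - 2) * y) = y"
proof (cases "y > 0")
  case True
  have "\<bar>y\<bar> powr (p - 2) * y = y powr (p - 2) * y powr 1"
    using True by simp
  also have "\<dots> = y powr (p - 2 + 1)" by (rule powr_add[symmetric])
  also have "\<dots> = y powr (p - 1)" by simp
  finally have eq: "\<bar>y\<bar> powr (p - 2) * y = y powr (p - 1)" .
  have "psi p (y powr (p - 1)) = (y powr (p - 1)) powr (1 / (p - 1))"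
    by (simp add: psi_nonneg)
  also have "\<dots> = y" using True p by (simp add: powr_powr)
  finally show ?thesis using eq by simp
next
  case False
  show ?thesis
  proof (cases "y = 0")
    case True then show ?thesis by (simp add: psi_def)
  next
    case False
    with \<open>\<not> y > 0\<close> have yn: "y < 0" by simp
    have "\<bar>y\<bar> powr (p - 2) * y = - ((- y) powr (p - 2) * (- y) powr 1)"
      using yn by simp
    also have "\<dots> = - ((- y) powr (p - 2 + 1))" by (subst powr_add) simp
    also have "\<dots> = - ((- y) powr (p - 1))" by simp
    finally have eq: "\<bar>y\<bar> powr (p - 2) * y = - ((- y) powr (p - 1))" .
    have "psi p (- ((- y) powr (p - 1))) = - (((- y) powr (p - 1)) powr (1 / (p - 1)))"
      by (simp add: psi_nonpos)
    also have "\<dots> = y" using yn p by (simp add: powr_powr)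
    finally show ?thesis using eq by simp
  qed
qed

lemma psi_mono:
  assumes p: "1 < p" and le: "g1 \<le> g2"
  shows "psi p g1 \<le> psi p g2"
proof -
  have e: "0 \<le> 1 / (p - 1)" using p by simp
  consider "0 \<le> g1" | "g1 < 0" "0 \<le> g2" | "g2 < 0" using le by linarith
  then show ?thesis
  proof cases
    case 1
    then show ?thesis using le by (simp add: psi_nonneg powr_mono2[OF e])
  next
    case 2
    then show ?thesis
      by (simp add: psi_nonneg psi_nonpos) (smt (verit) powr_ge_zero)
  next
    case 3
    then show ?thesis using le by (simp add: psi_nonpos powr_mono2[OF e])
  qed
qed

lemma psi_apow:
  assumes "1 < p" "0 < a"
  shows "psi p (a powr (p - 1)) = a"
  using assms by (simp add: psi_nonneg powr_powr)

definition Theta :: "real \<Rightarrow> real \<Rightarrow> real \<Rightarrow> real" where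
  "Theta p A \<kappa> = (A/2) / (\<kappa>*A/2) powr (1/p) + 2 * ((A/2) / \<kappa> powr (1/(p-1))) powr ((p-1)/p)"

lemma powr_inv_le:
  fixes p g X :: real
  assumes p: "1 < p" and g: "0 \<le> g" and le: "X \<le> g powr (1 + 1/(p-1))" and X: "0 \<le> X"
  shows "X powr ((p-1)/p) \<le> g"
proof -
  have "X powr ((p-1)/p) \<le> (g powr (1 + 1/(p-1))) powr ((p-1)/p)"
    using powr_mono2[of "(p-1)/p" X "g powr (1 + 1/(p-1))"] p le X by simp
  also have "\<dots> = g powr ((1 + 1/(p-1)) * ((p-1)/p))" by (simp add: powr_powr)
  also have "(1 + 1/(p-1)) * ((p-1)/p) = 1" using p by (simp add: field_simps)
  finally show ?thesis using g by simp
qed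

lemma powr_inv_ge:
  fixes p g X :: real
  assumes p: "1 < p" and g: "0 \<le> g" and le: "g powr (1 + 1/(p-1)) \<le> X"
  shows "g \<le> X powr ((p-1)/p)"
proof -
  have "(1 + 1/(p-1)) * ((p-1)/p) = 1" using p by (simp add: field_simps)
  then have "g = (g powr (1 + 1/(p-1))) powr ((p-1)/p)" using g by (simp add: powr_powr)
  also have "\<dots> \<le> X powr ((p-1)/p)"
    using powr_mono2[of "(p-1)/p" "g powr (1 + 1/(p-1))" X] p le by simp
  finally show ?thesis .
qed

lemma rising:
  fixes v G :: "real \<Rightarrow> real" and p x y \<kappa> A :: real
  assumes p: "1 < p" and xy: "x \<le> y" and kap: "0 < \<kappa>" and A: "0 < A"
    and Gmono: "\<And>s t. x \<le> s \<Longrightarrow> s \<le> t \<Longrightarrow> t \<le> y \<Longrightarrow> G t \<le> G s"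
    and Gnn: "\<And>t. x \<le> t \<Longrightarrow> t \<le> y \<Longrightarrow> 0 \<le> G t"
    and mvt: "\<And>s t. x \<le> s \<Longrightarrow> s \<le> t \<Longrightarrow> t \<le> y \<Longrightarrow>
       (t - s) * G t powr (1/(p-1)) \<le> v t - v s \<and> v t - v s \<le> (t - s) * G s powr (1/(p-1))"
    and drop: "\<And>s t. x \<le> s \<Longrightarrow> s \<le> t \<Longrightarrow> t \<le> y \<Longrightarrow> A/2 \<le> v s \<Longrightarrow> \<kappa> * (t - s) \<le> G s - G t"
    and vx: "0 \<le> v x" and vy: "v y = A"
    and cont: "continuous_on {x..y} v"
  shows "(\<forall>t. x \<le> t \<longrightarrow> t \<le> y \<longrightarrow> v t \<le> A/2 \<longrightarrow> (\<kappa>*A/2) powr ((p-1)/p) \<le> G t)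
         \<and> y - x \<le> Theta p A \<kappa>"
proof -
  define e where "e = 1/(p-1)"
  have e0: "0 < e" using p by (simp add: e_def)
  have key: "(\<kappa>*A/2) powr ((p-1)/p) \<le> G \<tau>" if t1: "x \<le> \<tau>" "\<tau> \<le> y" and vt: "v \<tau> = A/2" for \<tau>
  proof -
    have d1: "\<kappa> * (y - \<tau>) \<le> G \<tau> - G y" using drop[OF t1(1) t1(2) order_refl] vt by simp
    have Gy: "0 \<le> G y" using Gnn xy by simp
    have Gt: "0 \<le> G \<tau>" using Gnn t1 by simp
    have m1: "A/2 \<le> (y - \<tau>) * G \<tau> powr e" using mvt[OF t1(1) t1(2) order_refl] vt vy e_def by simp
    have "\<kappa> * A/2 \<le> \<kappa> * ((y - \<tau>) * G \<tau> powr e)" using m1 kap by simp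
    also have "\<dots> = (\<kappa> * (y - \<tau>)) * G \<tau> powr e" by simp
    also have "\<dots> \<le> G \<tau> * G \<tau> powr e"
      using d1 Gy by (intro mult_right_mono) auto
    also have "\<dots> = G \<tau> powr (1 + e)"
    proof (cases "G \<tau> = 0")
      case True then show ?thesis by simp
    next
      case False then show ?thesis using Gt by (simp add: powr_add)
    qed
    finally have "\<kappa> * A/2 \<le> G \<tau> powr (1 + 1/(p-1))" by (simp add: e_def)
    then show ?thesis using powr_inv_le[OF p Gt] kap A by simp
  qed
  have C1: "\<forall>t. x \<le> t \<longrightarrow> t \<le> y \<longrightarrow> v t \<le> A/2 \<longrightarrow> (\<kappa>*A/2) powr ((p-1)/p) \<le> G t"
  proof (intro allI impI)
    fix t assume t: "x \<le> t" "t \<le> y" "v t \<le> A/2"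
    have "continuous_on {t..y} v" by (rule continuous_on_subset[OF cont]) (use t in auto)
    then obtain \<tau> where tau: "t \<le> \<tau>" "\<tau> \<le> y" "v \<tau> = A/2"
      using IVT'[of v t "A/2" y] t vy A by auto
    have "(\<kappa>*A/2) powr ((p-1)/p) \<le> G \<tau>" using key tau t by simp
    also have "\<dots> \<le> G t" using Gmono t tau by simp
    finally show "(\<kappa>*A/2) powr ((p-1)/p) \<le> G t" .
  qed
  define W where "W = (\<kappa>*A/2) powr (1/p)"
  have W0: "0 < W" using kap A by (simp add: W_def)
  obtain \<tau> where tau: "x \<le> \<tau>" "\<tau> \<le> y" "A/2 \<le> v \<tau>" "\<tau> - x \<le> (A/2) / W"
  proof (cases "A/2 \<le> v x")
    case True
    then show ?thesis using that[of x] xy W0 A by simp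
  next
    case False
    obtain \<tau> where tau: "x \<le> \<tau>" "\<tau> \<le> y" "v \<tau> = A/2"
      using IVT'[of v x "A/2" y] False xy vy A cont by auto
    have b: "(\<kappa>*A/2) powr ((p-1)/p) \<le> G \<tau>" using key tau by simp
    have "W = ((\<kappa>*A/2) powr ((p-1)/p)) powr e"
      using p by (simp add: W_def e_def powr_powr)
    also have "\<dots> \<le> G \<tau> powr e" using b e0 by (intro powr_mono2) auto
    finally have WG: "W \<le> G \<tau> powr e" .
    have "(\<tau> - x) * W \<le> (\<tau> - x) * G \<tau> powr e" using WG tau by (intro mult_left_mono) auto
    also have "\<dots> \<le> v \<tau> - v x" using mvt[OF order_refl tau(1) tau(2)] e_def by simp
    also have "\<dots> \<le> A/2" using tau vx by simp
    finally have "(\<tau> - x) * W \<le> A/2" .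
    then have "\<tau> - x \<le> (A/2) / W" using W0 by (simp add: field_simps)
    then show ?thesis using that[of \<tau>] tau by simp
  qed
  define d where "d = (y - \<tau>)/2"
  have d0: "0 \<le> d" using tau by (simp add: d_def)
  have top: "2 * d \<le> 2 * ((A/2) / \<kappa> powr (1/(p-1))) powr ((p-1)/p)"
  proof (cases "d = 0")
    case True then show ?thesis by simp
  next
    case False
    with d0 have dp: "0 < d" by simp
    define mid where "mid = (\<tau> + y)/2"
    have mid: "\<tau> \<le> mid" "mid \<le> y" "x \<le> mid" using tau by (auto simp: mid_def)
    have Gmid: "0 \<le> G mid" using Gnn mid by simp
    have "0 \<le> (mid - \<tau>) * G mid powr (1/(p-1))" using mid by simp
    also have "\<dots> \<le> v mid - v \<tau>" using mvt[OF tau(1) mid(1) mid(2)] by simp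
    finally have vm: "A/2 \<le> v mid" using tau by simp
    have "0 \<le> (y - mid) * G y powr (1/(p-1))" using mid by simp
    also have "\<dots> \<le> v y - v mid" using mvt[OF mid(3) mid(2) order_refl] by simp
    finally have vm2: "v mid \<le> A" using vy by simp
    have "\<kappa> * (y - mid) \<le> G mid - G y" using drop[OF mid(3) mid(2) order_refl vm] .
    moreover have "y - mid = d" by (simp add: mid_def d_def field_simps)
    ultimately have dr: "\<kappa> * d \<le> G mid" using Gnn[of y] xy by simp
    have "d * (\<kappa> * d) powr e \<le> d * G mid powr e"
      using dr kap d0 e0 by (intro mult_left_mono powr_mono2) auto
    also have "\<dots> = (mid - \<tau>) * G mid powr e" by (simp add: mid_def d_def field_simps)
    also have "\<dots> \<le> v mid - v \<tau>" using mvt[OF tau(1) mid(1) mid(2)] e_def by simp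
    also have "\<dots> \<le> A/2" using vm2 tau by simp
    finally have "d * (\<kappa> * d) powr e \<le> A/2" .
    moreover have "d * (\<kappa> * d) powr e = \<kappa> powr e * d powr (1 + e)"
      using dp kap by (simp add: powr_mult powr_add)
    ultimately have "\<kappa> powr e * d powr (1 + e) \<le> A/2" by simp
    then have "d powr (1 + 1/(p-1)) \<le> (A/2) / \<kappa> powr (1/(p-1))"
      using kap by (simp add: field_simps e_def)
    from powr_inv_ge[OF p d0 this] have "d \<le> ((A/2) / \<kappa> powr (1/(p-1))) powr ((p-1)/p)" .
    then show ?thesis by simp
  qed
  have "y - x = (\<tau> - x) + 2 * d" by (simp add: d_def field_simps)
  also have "\<dots> \<le> (A/2) / W + 2 * ((A/2) / \<kappa> powr (1/(p-1))) powr ((p-1)/p)"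
    using tau top by simp
  finally show ?thesis using C1 by (simp add: Theta_def W_def)
qed

lemma falling:
  fixes v G :: "real \<Rightarrow> real" and p x y \<kappa> A :: real
  assumes p: "1 < p" and xy: "x \<le> y" and kap: "0 < \<kappa>" and A: "0 < A"
    and Gmono: "\<And>s t. x \<le> s \<Longrightarrow> s \<le> t \<Longrightarrow> t \<le> y \<Longrightarrow> G t \<le> G s"
    and Gnp: "\<And>t. x \<le> t \<Longrightarrow> t \<le> y \<Longrightarrow> G t \<le> 0"
    and mvt: "\<And>s t. x \<le> s \<Longrightarrow> s \<le> t \<Longrightarrow> t \<le> y \<Longrightarrow>
       - ((t - s) * (- G t) powr (1/(p-1))) \<le> v t - v s \<and> v t - v s \<le> - ((t - s) * (- G s) powr (1/(p-1)))"
    and drop: "\<And>s t. x \<le> s \<Longrightarrow> s \<le> t \<Longrightarrow> t \<le> y \<Longrightarrow> A/2 \<le> v t \<Longrightarrow> \<kappa> * (t - s) \<le> G s - G t"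
    and vx: "v x = A" and vy: "0 \<le> v y"
    and cont: "continuous_on {x..y} v"
  shows "(\<forall>t. x \<le> t \<longrightarrow> t \<le> y \<longrightarrow> v t \<le> A/2 \<longrightarrow> (\<kappa>*A/2) powr ((p-1)/p) \<le> - G t)
         \<and> y - x \<le> Theta p A \<kappa>"
proof -
  have R: "(\<forall>t. -y \<le> t \<longrightarrow> t \<le> -x \<longrightarrow> v (-t) \<le> A/2 \<longrightarrow> (\<kappa>*A/2) powr ((p-1)/p) \<le> - G (-t))
         \<and> -x - -y \<le> Theta p A \<kappa>"
  proof (rule rising[of p "-y" "-x" \<kappa> A "\<lambda>t. - G (- t)" "\<lambda>t. v (- t)"])
    show "1 < p" "-y \<le> -x" "0 < \<kappa>" "0 < A" by (use p xy kap A in auto)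
    show "- G (- t) \<le> - G (- s)" if "-y \<le> s" "s \<le> t" "t \<le> -x" for s t
      using Gmono[of "-t" "-s"] that by auto
    show "0 \<le> - G (- t)" if "-y \<le> t" "t \<le> -x" for t using Gnp[of "-t"] that by auto
    show "(t - s) * (- G (- t)) powr (1 / (p - 1)) \<le> v (- t) - v (- s) \<and>
          v (- t) - v (- s) \<le> (t - s) * (- G (- s)) powr (1 / (p - 1))"
      if "-y \<le> s" "s \<le> t" "t \<le> -x" for s t
      using mvt[of "-t" "-s"] that by auto
    show "\<kappa> * (t - s) \<le> - G (- s) - - G (- t)"
      if "-y \<le> s" "s \<le> t" "t \<le> -x" "A/2 \<le> v (- s)" for s t
      using drop[of "-t" "-s"] that by auto
    show "0 \<le> v (- (- y))" "v (- (- x)) = A" using vx vy by auto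
    show "continuous_on {- y..- x} (\<lambda>t. v (- t))"
      by (rule continuous_on_compose2[OF cont]) (auto intro: continuous_intros)
  qed
  show ?thesis
  proof
    show "\<forall>t. x \<le> t \<longrightarrow> t \<le> y \<longrightarrow> v t \<le> A/2 \<longrightarrow> (\<kappa>*A/2) powr ((p-1)/p) \<le> - G t"
    proof (intro allI impI)
      fix t assume "x \<le> t" "t \<le> y" "v t \<le> A/2"
      then show "(\<kappa>*A/2) powr ((p-1)/p) \<le> - G t" using R[THEN conjunct1, rule_format, of "-t"] by simp
    qed
    show "y - x \<le> Theta p A \<kappa>" using R by simp
  qed
qed

locale core =
  fixes p \<beta> l m M1 Cf Cm C1 e1 T :: real and f h :: "real \<Rightarrow> real"
    and v :: "real \<Rightarrow> real \<Rightarrow> real"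
  assumes p1: "1 < p" and Tpos: "0 < T" and bpos: "0 < \<beta>" and lpos: "p - 1 < l"
    and m01: "0 < m" "m < 1"
    and f_neg: "\<And>x. 0 < x \<Longrightarrow> x < \<beta> \<Longrightarrow> f x < 0"
    and f_nonneg: "\<And>x. \<beta> \<le> x \<Longrightarrow> 0 \<le> f x"
    and fbeta: "f \<beta> = 0"
    and M1pos: "0 < M1"
    and f_lower: "\<And>x. M1 \<le> x \<Longrightarrow> x powr l / 2 \<le> f x"
    and Cf0: "0 \<le> Cf"
    and f_upper: "\<And>x. \<beta> \<le> x \<Longrightarrow> f x \<le> 2 * x powr l + Cf"
    and Cm0: "0 \<le> Cm"
    and f_small: "\<And>x. 0 < x \<Longrightarrow> x \<le> \<beta> \<Longrightarrow> - f x \<le> Cm * x powr (-m) + Cm"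
    and h0: "h 0 = 0" and hpos: "\<And>t. 0 < t \<Longrightarrow> t \<le> T \<Longrightarrow> 0 < h t"
    and hanti: "\<And>s t. 0 < s \<Longrightarrow> s \<le> t \<Longrightarrow> t < T \<Longrightarrow> h t \<le> h s"
    and C1pos: "0 < C1" and e1: "-1 < e1"
    and hup: "\<And>t. 0 < t \<Longrightarrow> t \<le> T \<Longrightarrow> h t \<le> C1 * t powr e1"
    and sol: "\<And>a. 0 < a \<Longrightarrow> is_sol p h f a T (v a)"

locale traj = core +
  fixes a :: real and dv :: "real \<Rightarrow> real"
  assumes apos: "0 < a"
    and dv_cont: "continuous_on {0..T} dv"
    and deriv: "\<And>t. t \<in> {0..T} \<Longrightarrow> (v a has_real_derivative dv t) (at t within {0..T})"
    and v0: "v a 0 = 0"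
    and intg: "\<And>t. t \<in> {0..T} \<Longrightarrow> (\<lambda>s. h s * f (v a s)) integrable_on {0..t}"
    and eq: "\<And>t. t \<in> {0..T} \<Longrightarrow>
       \<bar>dv t\<bar> powr (p - 2) * dv t = a powr (p - 1) - integral {0..t} (\<lambda>s. h s * f (v a s))"
begin

definition Hf where "Hf s = h s * f (v a s)"
definition G where "G t = a powr (p - 1) - integral {0..t} Hf"

lemma dv_psi: "0 \<le> t \<Longrightarrow> t \<le> T \<Longrightarrow> dv t = psi p (G t)"
  using psi_phi[OF p1, of "dv t"] eq[of t] by (simp add: G_def Hf_def[abs_def])

lemma G_cont: "continuous_on {0..T} G"
proof -
  have "Hf integrable_on {0..T}" using intg[of T] Tpos by (simp add: Hf_def[abs_def])
  from indefinite_integral_continuous_1[OF this] show ?thesis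
    unfolding G_def by (intro continuous_intros)
qed

lemma v_cont: "continuous_on {0..T} (v a)"
  by (rule DERIV_continuous_on[OF deriv])

lemma G0: "G 0 = a powr (p - 1)"
  by (simp add: G_def)

lemma Hf_int: "0 \<le> s \<Longrightarrow> s \<le> t \<Longrightarrow> t \<le> T \<Longrightarrow> Hf integrable_on {s..t}"
  using intg[of t] by (auto simp: Hf_def[abs_def] intro: integrable_on_subinterval)

lemma G_diff:
  assumes "0 \<le> s" "s \<le> t" "t \<le> T"
  shows "G s - G t = integral {s..t} Hf"
proof -
  have "Hf integrable_on {0..t}" using intg[of t] assms by (simp add: Hf_def[abs_def])
  from Henstock_Kurzweil_Integration.integral_combine[OF assms(1,2) this] show ?thesis by (simp add: G_def)
qed

lemma MV_point:
  assumes st: "0 \<le> s" "s < t" "t \<le> T"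
  shows "\<exists>z. s < z \<and> z < t \<and> v a t - v a s = (t - s) * dv z"
proof -
  have c: "continuous_on {s..t} (v a)" by (rule continuous_on_subset[OF v_cont]) (use st in auto)
  have d: "(v a has_real_derivative dv r) (at r)" if "s < r" "r < t" for r
  proof -
    have "(v a has_real_derivative dv r) (at r within {0..T})" using deriv that st by simp
    moreover have "at r within {0..T} = at r" using that st by (intro at_within_Icc_at) auto
    ultimately show ?thesis by simp
  qed
  obtain l z where z: "s < z" "z < t" "(v a has_real_derivative l) (at z)" "v a t - v a s = (t - s) * l"
    using MVT[OF st(2) c] d by (meson real_differentiable_def)
  have "l = dv z" using DERIV_unique[OF z(3) d[OF z(1,2)]] .
  then show ?thesis using z by blast
qed

lemma MV_lo:
  assumes st: "0 \<le> s" "s \<le> t" "t \<le> T"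
    and b: "\<And>r. s \<le> r \<Longrightarrow> r \<le> t \<Longrightarrow> L \<le> dv r"
  shows "L * (t - s) \<le> v a t - v a s"
proof (cases "s = t")
  case True then show ?thesis by simp
next
  case False
  with st have lt: "s < t" by simp
  obtain z where z: "s < z" "z < t" "v a t - v a s = (t - s) * dv z" using MV_point[OF st(1) lt st(3)] by blast
  have "L \<le> dv z" using b[of z] z by auto
  then show ?thesis using z(3) lt by (simp add: mult_right_mono mult.commute)
qed

lemma MV_up:
  assumes st: "0 \<le> s" "s \<le> t" "t \<le> T"
    and b: "\<And>r. s \<le> r \<Longrightarrow> r \<le> t \<Longrightarrow> dv r \<le> U"
  shows "v a t - v a s \<le> U * (t - s)"
proof (cases "s = t")
  case True then show ?thesis by simp
next
  case False
  with st have lt: "s < t" by simp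
  obtain z where z: "s < z" "z < t" "v a t - v a s = (t - s) * dv z" using MV_point[OF st(1) lt st(3)] by blast
  have "dv z \<le> U" using b[of z] z by auto
  then show ?thesis using z(3) lt by (simp add: mult_right_mono mult.commute)
qed

lemma G_anti:
  assumes "0 < s" "s \<le> t" "t \<le> T" and vb: "\<And>r. s \<le> r \<Longrightarrow> r \<le> t \<Longrightarrow> \<beta> \<le> v a r"
  shows "G t \<le> G s"
proof -
  have "0 \<le> integral {s..t} Hf"
    using Hf_int[of s t] assms
    by (intro integral_nonneg) (auto simp: Hf_def intro!: mult_nonneg_nonneg less_imp_le[OF hpos] f_nonneg)
  then show ?thesis using G_diff[of s t] assms by simp
qed

lemma v_pos_near0: "\<exists>\<delta>>0. \<delta> \<le> T \<and> (\<forall>t. 0 < t \<and> t \<le> \<delta> \<longrightarrow> 0 < v a t)"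
proof -
  define g0 where "g0 = a powr (p - 1)"
  have g0: "0 < g0" using apos by (simp add: g0_def)
  have "0 \<in> {0..T}" using Tpos by simp
  with G_cont obtain d where d: "d > 0" "\<forall>x'\<in>{0..T}. dist x' 0 < d \<longrightarrow> dist (G x') (G 0) < g0/2"
    unfolding continuous_on_iff using g0 by (metis half_gt_zero)
  define \<delta> where "\<delta> = min (d/2) T"
  have \<delta>: "0 < \<delta>" "\<delta> \<le> T" "\<delta> < d" using d Tpos by (auto simp: \<delta>_def)
  have Gb: "g0/2 \<le> G r" if "0 \<le> r" "r \<le> \<delta>" for r
  proof -
    have "\<bar>G r - G 0\<bar> < g0/2" using d(2)[rule_format, of r] that \<delta> by (auto simp: dist_real_def)
    then show ?thesis using G0 g0_def by linarith
  qed
  have pg: "0 < psi p (g0/2)" using g0 by (simp add: psi_nonneg)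
  have "0 < v a t" if "0 < t" "t \<le> \<delta>" for t
  proof -
    have "psi p (g0/2) * (t - 0) \<le> v a t - v a 0"
    proof (rule MV_lo)
      show "0 \<le> (0::real)" "0 \<le> t" "t \<le> T" using that \<delta> by auto
      show "psi p (g0/2) \<le> dv r" if "0 \<le> r" "r \<le> t" for r
        using that \<open>t \<le> \<delta>\<close> \<delta> by (simp add: dv_psi) (rule psi_mono[OF p1 Gb]; simp)
    qed
    then show ?thesis using pg that v0 by (smt (verit) mult_pos_pos)
  qed
  then show ?thesis using \<delta> by blast
qed

end

lemma first_le:
  fixes g :: "real \<Rightarrow> real"
  assumes ab: "a \<le> b" and cont: "continuous_on {a..b} g" and ex: "\<exists>t\<in>{a..b}. g t \<le> c"
  shows "\<exists>\<tau>. a \<le> \<tau> \<and> \<tau> \<le> b \<and> g \<tau> \<le> c \<and> (\<forall>t. a \<le> t \<and> t < \<tau> \<longrightarrow> c < g t)"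
proof -
  define S where "S = {a..b} \<inter> g -` {..c}"
  have cl: "closed S" unfolding S_def by (rule continuous_closed_preimage[OF cont]) auto
  have ne: "S \<noteq> {}" using ex by (auto simp: S_def)
  have bb: "bdd_below S" unfolding S_def by (rule bdd_belowI[of _ a]) auto
  have inS: "Inf S \<in> S" using closed_contains_Inf[OF ne bb cl] .
  have "c < g t" if "a \<le> t" "t < Inf S" for t
  proof (rule ccontr)
    assume "\<not> c < g t"
    then have "t \<in> S" using that inS by (auto simp: S_def)
    then have "Inf S \<le> t" using bb by (rule cInf_lower)
    then show False using that by simp
  qed
  then show ?thesis using inS by (intro exI[of _ "Inf S"]) (auto simp: S_def)
qed

lemma first_ge:
  fixes g :: "real \<Rightarrow> real"
  assumes ab: "a \<le> b" and cont: "continuous_on {a..b} g" and ex: "\<exists>t\<in>{a..b}. c \<le> g t"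
  shows "\<exists>\<tau>. a \<le> \<tau> \<and> \<tau> \<le> b \<and> c \<le> g \<tau> \<and> (\<forall>t. a \<le> t \<and> t < \<tau> \<longrightarrow> g t < c)"
proof -
  have "\<exists>\<tau>. a \<le> \<tau> \<and> \<tau> \<le> b \<and> (\<lambda>t. - g t) \<tau> \<le> - c \<and> (\<forall>t. a \<le> t \<and> t < \<tau> \<longrightarrow> - c < (\<lambda>t. - g t) t)"
    by (rule first_le[OF ab]) (use cont ex in \<open>auto intro: continuous_intros\<close>)
  then show ?thesis by auto
qed

lemma int_powr:
  fixes e s y :: real
  assumes s: "0 < s" "s \<le> y" and e: "-1 < e"
  shows "((\<lambda>r. r powr e) has_integral (y powr (e+1) - s powr (e+1)) / (e+1)) {s..y}"
proof -
  have "((\<lambda>r. r powr (e+1) / (e+1)) has_vector_derivative x powr e) (at x within {s..y})"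
    if "x \<in> {s..y}" for x
  proof -
    have x: "0 < x" using that s by simp
    have "((\<lambda>r. r powr (e+1)) has_real_derivative (e+1) * x powr e) (at x)"
      using has_real_derivative_powr[OF x, of "e+1"] by simp
    from DERIV_cdivide[OF this, of "e+1"]
    have "((\<lambda>r. r powr (e+1) / (e+1)) has_real_derivative (e+1) * x powr e / (e+1)) (at x)" .
    then have "((\<lambda>r. r powr (e+1) / (e+1)) has_real_derivative x powr e) (at x)"
      using e by simp
    then show ?thesis
      by (simp add: has_real_derivative_iff_has_vector_derivative has_vector_derivative_at_within)
  qed
  from fundamental_theorem_of_calculus[OF s(2) this] show ?thesis by (simp add: diff_divide_distrib)
qed

lemma int_descent:
  fixes \<nu> w m tb t2 :: real
  assumes nu: "0 < \<nu>" and w: "0 < w" and tt: "tb \<le> t2" and m: "m < 1"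
  shows "((\<lambda>r. (\<nu> + w * (t2 - r)) powr (-m)) has_integral
          ((\<nu> + w * (t2 - tb)) powr (1-m) - \<nu> powr (1-m)) / (w * (1-m))) {tb..t2}"
proof -
  define F where "F r = - ((\<nu> + w * (t2 - r)) powr (1-m) / (w * (1-m)))" for r
  have "(F has_vector_derivative (\<nu> + w * (t2 - x)) powr (-m)) (at x within {tb..t2})"
    if "x \<in> {tb..t2}" for x
  proof -
    have pos: "0 < \<nu> + w * (t2 - x)" using that nu w by (simp add: add_pos_nonneg)
    have d1: "((\<lambda>r. \<nu> + w * (t2 - r)) has_real_derivative - w) (at x)"
      by (auto intro!: derivative_eq_intros)
    have "((\<lambda>r. (\<nu> + w * (t2 - r)) powr (1-m)) has_real_derivative
            (1-m) * (\<nu> + w * (t2 - x)) powr (1 - m - 1) * (- w)) (at x)"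
      using DERIV_chain2[OF has_real_derivative_powr[OF pos, of "1-m"] d1] by simp
    then have "(F has_real_derivative - ((1-m) * (\<nu> + w * (t2 - x)) powr (1 - m - 1) * (- w) / (w * (1-m)))) (at x)"
      unfolding F_def by (intro DERIV_minus DERIV_cdivide)
    moreover have "- ((1-m) * (\<nu> + w * (t2 - x)) powr (1 - m - 1) * (- w) / (w * (1-m))) = (\<nu> + w * (t2 - x)) powr (-m)"
      using w m by (simp add: field_simps)
    ultimately show ?thesis
      by (simp add: has_real_derivative_iff_has_vector_derivative has_vector_derivative_at_within)
  qed
  from fundamental_theorem_of_calculus[OF tt this] show ?thesis
    by (simp add: F_def diff_divide_distrib)
qed

locale run = traj +
  fixes \<epsilon> Astar :: real
  assumes eps: "0 < \<epsilon>" "\<epsilon> < T"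
    and pos: "\<And>t. 0 < t \<Longrightarrow> t \<le> \<epsilon> \<Longrightarrow> 0 < v a t"
    and R1: "\<And>A. Astar \<le> A \<Longrightarrow> 2*M1 \<le> A \<and> 2*\<beta> \<le> A"
    and R2: "\<And>A. Astar \<le> A \<Longrightarrow> Theta p A (h \<epsilon> * (A/2) powr l / 2) \<le> \<epsilon>/8"
    and R3: "\<And>A. Astar \<le> A \<Longrightarrow>
       \<beta> / ((((h \<epsilon> * (A/2) powr l / 2) * A / 2) powr ((p-1)/p)) / 2) powr (1/(p-1)) \<le> 3*\<epsilon>/8"
    and R4: "\<And>A. Astar \<le> A \<Longrightarrow>
       2 powr (2 + 1/(p-1)) * (Cm * (\<beta> powr (1-m)/(1-m) + \<beta>)) < (A/2) powr l / 2 * A"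
    and a1: "4*\<beta>/\<epsilon> \<le> a"
    and a2: "Astar \<le> (\<epsilon>/4) * psi p (a powr (p-1) / 2)"
    and a3: "(2 * Astar powr l + Cf) * (C1 * T powr (e1+1) / (e1+1)) < a powr (p-1) / 2"
begin

lemma c_pos: "0 < h \<epsilon>" using hpos eps by simp

lemma h_mono: "0 < s \<Longrightarrow> s \<le> t \<Longrightarrow> t \<le> \<epsilon> \<Longrightarrow> h t \<le> h s"
  using hanti eps by simp

lemma h_ge_c: "0 < t \<Longrightarrow> t \<le> \<epsilon> \<Longrightarrow> h \<epsilon> \<le> h t"
  using h_mono by simp

lemma l_pos: "0 < l" using lpos p1 by simp

lemma fle0: "0 < x \<Longrightarrow> x \<le> \<beta> \<Longrightarrow> f x \<le> 0"
  using f_neg[of x] fbeta by (cases "x = \<beta>") auto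

lemma v_cont_sub: "0 \<le> x \<Longrightarrow> y \<le> T \<Longrightarrow> continuous_on {x..y} (v a)"
  by (rule continuous_on_subset[OF v_cont]) auto

lemma G_cont_sub: "0 \<le> x \<Longrightarrow> y \<le> T \<Longrightarrow> continuous_on {x..y} G"
  by (rule continuous_on_subset[OF G_cont]) auto

lemma phase0: "\<exists>s1. 0 < s1 \<and> s1 \<le> \<epsilon>/4 \<and> v a s1 = \<beta> \<and> a powr (p-1) \<le> G s1"
proof -
  have nonpos: "a powr (p-1) \<le> G t"
    if t: "0 \<le> t" "t \<le> \<epsilon>" and vb: "\<And>r. 0 \<le> r \<Longrightarrow> r \<le> t \<Longrightarrow> v a r \<le> \<beta>" for t
  proof -
    have "integral {0..t} Hf \<le> integral {0..t} (\<lambda>_. 0::real)"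
    proof (rule integral_le)
      show "Hf integrable_on {0..t}" using Hf_int[of 0 t] t eps by simp
      show "(\<lambda>_. 0::real) integrable_on {0..t}" by (rule integrable_0)
      show "Hf r \<le> 0" if "r \<in> {0..t}" for r
      proof (cases "r = 0")
        case True then show ?thesis by (simp add: Hf_def h0)
      next
        case False
        then have r: "0 < r" "r \<le> t" using that by auto
        have "0 < h r" using hpos r t eps by simp
        moreover have "f (v a r) \<le> 0" using fle0 pos[of r] vb[of r] r t by simp
        ultimately show ?thesis by (simp add: Hf_def mult_nonneg_nonpos)
      qed
    qed
    then have "G 0 - G t \<le> 0" using G_diff[of 0 t] t eps by simp
    then show ?thesis using G0 by simp
  qed
  have dvge: "a \<le> dv r" if "0 \<le> r" "r \<le> \<epsilon>" "a powr (p-1) \<le> G r" for r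
  proof -
    have "a = psi p (a powr (p-1))" using psi_apow[OF p1 apos] by simp
    also have "\<dots> \<le> psi p (G r)" using psi_mono[OF p1 that(3)] .
    finally show ?thesis using dv_psi[of r] that eps by simp
  qed
  have ex: "\<exists>t\<in>{0..\<epsilon>}. \<beta> \<le> v a t"
  proof (rule ccontr)
    assume "\<not> ?thesis"
    then have lt: "\<And>t. 0 \<le> t \<Longrightarrow> t \<le> \<epsilon> \<Longrightarrow> v a t < \<beta>" by (auto simp: not_le)
    have "a * (\<epsilon> - 0) \<le> v a \<epsilon> - v a 0"
    proof (rule MV_lo)
      show "0 \<le> (0::real)" "0 \<le> \<epsilon>" "\<epsilon> \<le> T" using eps by auto
      show "a \<le> dv r" if "0 \<le> r" "r \<le> \<epsilon>" for r
        using dvge[OF that] nonpos[of r] lt that by (meson less_imp_le order_trans)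
    qed
    then have "a * \<epsilon> < \<beta>" using lt[of \<epsilon>] eps v0 by simp
    moreover have "4 * \<beta> \<le> a * \<epsilon>" using a1 eps by (simp add: field_simps)
    ultimately show False using bpos by simp
  qed
  obtain s1 where s1: "0 \<le> s1" "s1 \<le> \<epsilon>" "\<beta> \<le> v a s1" and bef: "\<And>t. 0 \<le> t \<Longrightarrow> t < s1 \<Longrightarrow> v a t < \<beta>"
    using first_ge[OF _ v_cont_sub ex] eps by auto
  have s1p: "0 < s1" using s1 v0 bpos by (cases "s1 = 0") auto
  have "v a s1 \<le> \<beta>"
    by (rule cont_left_le[OF s1p v_cont_sub]) (use bef s1 eps in \<open>auto intro: less_imp_le\<close>)
  then have vs1: "v a s1 = \<beta>" using s1 by simp
  have vle: "v a r \<le> \<beta>" if "0 \<le> r" "r \<le> s1" for r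
    using bef[of r] vs1 that by (cases "r = s1") auto
  have Gs: "a powr (p-1) \<le> G r" if "0 \<le> r" "r \<le> s1" for r
    using nonpos[of r] vle that s1 by simp
  have "a * (s1 - 0) \<le> v a s1 - v a 0"
  proof (rule MV_lo)
    show "0 \<le> (0::real)" "0 \<le> s1" "s1 \<le> T" using s1 eps by auto
    show "a \<le> dv r" if "0 \<le> r" "r \<le> s1" for r using dvge Gs that s1 by simp
  qed
  then have "a * s1 \<le> \<beta>" using vs1 v0 by simp
  then have "s1 \<le> \<beta> / a" using apos by (simp add: field_simps)
  also have "\<dots> \<le> \<epsilon>/4" using a1 apos eps bpos by (simp add: field_simps)
  finally show ?thesis using s1p vs1 Gs[of s1] s1 by auto
qed

lemma rise_mvt:
  assumes st: "0 \<le> s" "s \<le> t" "t \<le> T"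
    and Gb: "\<And>r. s \<le> r \<Longrightarrow> r \<le> t \<Longrightarrow> G t \<le> G r \<and> G r \<le> G s" and G0: "0 \<le> G t"
  shows "(t - s) * G t powr (1/(p-1)) \<le> v a t - v a s \<and> v a t - v a s \<le> (t - s) * G s powr (1/(p-1))"
proof
  have "G t powr (1/(p-1)) * (t - s) \<le> v a t - v a s"
  proof (rule MV_lo[OF st])
    fix r assume r: "s \<le> r" "r \<le> t"
    have "G t powr (1/(p-1)) = psi p (G t)" using G0 by (simp add: psi_nonneg)
    also have "\<dots> \<le> psi p (G r)" using Gb[OF r] by (intro psi_mono[OF p1]) auto
    finally show "G t powr (1/(p-1)) \<le> dv r" using dv_psi[of r] r st by simp
  qed
  then show "(t - s) * G t powr (1/(p-1)) \<le> v a t - v a s" by (simp add: mult.commute)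
  have "v a t - v a s \<le> G s powr (1/(p-1)) * (t - s)"
  proof (rule MV_up[OF st])
    fix r assume r: "s \<le> r" "r \<le> t"
    have "psi p (G r) \<le> psi p (G s)" using Gb[OF r] by (intro psi_mono[OF p1]) auto
    also have "\<dots> = G s powr (1/(p-1))" using G0 Gb[of t] st by (simp add: psi_nonneg)
    finally show "dv r \<le> G s powr (1/(p-1))" using dv_psi[of r] r st by simp
  qed
  then show "v a t - v a s \<le> (t - s) * G s powr (1/(p-1))" by (simp add: mult.commute)
qed

lemma fall_mvt:
  assumes st: "0 \<le> s" "s \<le> t" "t \<le> T"
    and Gb: "\<And>r. s \<le> r \<Longrightarrow> r \<le> t \<Longrightarrow> G t \<le> G r \<and> G r \<le> G s" and G0: "G s \<le> 0"
  shows "- ((t - s) * (- G t) powr (1/(p-1))) \<le> v a t - v a s \<and> v a t - v a s \<le> - ((t - s) * (- G s) powr (1/(p-1)))"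
proof
  have "(- ((- G t) powr (1/(p-1)))) * (t - s) \<le> v a t - v a s"
  proof (rule MV_lo[OF st])
    fix r assume r: "s \<le> r" "r \<le> t"
    have "- ((- G t) powr (1/(p-1))) = psi p (G t)" using G0 Gb[of t] st by (simp add: psi_nonpos)
    also have "\<dots> \<le> psi p (G r)" using Gb[OF r] by (intro psi_mono[OF p1]) auto
    finally show "- ((- G t) powr (1/(p-1))) \<le> dv r" using dv_psi[of r] r st by simp
  qed
  then show "- ((t - s) * (- G t) powr (1/(p-1))) \<le> v a t - v a s" by (simp add: mult.commute)
  have "v a t - v a s \<le> (- ((- G s) powr (1/(p-1)))) * (t - s)"
  proof (rule MV_up[OF st])
    fix r assume r: "s \<le> r" "r \<le> t"
    have "psi p (G r) \<le> psi p (G s)" using Gb[OF r] by (intro psi_mono[OF p1]) auto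
    also have "\<dots> = - ((- G s) powr (1/(p-1)))" using G0 by (simp add: psi_nonpos)
    finally show "dv r \<le> - ((- G s) powr (1/(p-1)))" using dv_psi[of r] r st by simp
  qed
  then show "v a t - v a s \<le> - ((t - s) * (- G s) powr (1/(p-1)))" by (simp add: mult.commute)
qed

lemma mono_up:
  assumes s1: "0 < s1" "s1 \<le> y" "y \<le> \<epsilon>" "v a s1 = \<beta>"
    and Gn: "\<And>t. s1 \<le> t \<Longrightarrow> t \<le> y \<Longrightarrow> 0 \<le> G t"
  shows "\<And>s t. s1 \<le> s \<Longrightarrow> s \<le> t \<Longrightarrow> t \<le> y \<Longrightarrow> v a s \<le> v a t"
    and "\<And>t. s1 \<le> t \<Longrightarrow> t \<le> y \<Longrightarrow> \<beta> \<le> v a t"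
    and "\<And>s t. s1 \<le> s \<Longrightarrow> s \<le> t \<Longrightarrow> t \<le> y \<Longrightarrow> G t \<le> G s"
proof -
  show mono: "v a s \<le> v a t" if "s1 \<le> s" "s \<le> t" "t \<le> y" for s t
  proof -
    have "0 * (t - s) \<le> v a t - v a s"
    proof (rule MV_lo)
      show "0 \<le> s" "s \<le> t" "t \<le> T" using that s1 eps by auto
      fix r assume "s \<le> r" "r \<le> t"
      then have "0 \<le> G r" "0 \<le> r" "r \<le> T" using Gn[of r] that s1 eps by auto
      then show "0 \<le> dv r" using dv_psi[of r] by (simp add: psi_nonneg)
    qed
    then show ?thesis by simp
  qed
  show vb: "\<beta> \<le> v a t" if "s1 \<le> t" "t \<le> y" for t using mono[of s1 t] that s1 by simp
  show "G t \<le> G s" if "s1 \<le> s" "s \<le> t" "t \<le> y" for s t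
    by (rule G_anti) (use that s1 eps vb in auto)
qed

lemma drop_gen:
  assumes st: "0 < s" "s \<le> t" "t \<le> \<epsilon>" and eta: "0 \<le> \<eta>" and A: "2*M1 \<le> A"
    and b: "\<And>r. s \<le> r \<Longrightarrow> r \<le> t \<Longrightarrow> \<eta> \<le> h r \<and> A/2 \<le> v a r"
  shows "\<eta> * (A/2) powr l / 2 * (t - s) \<le> G s - G t"
proof -
  have "integral {s..t} (\<lambda>_. \<eta> * (A/2) powr l / 2) \<le> integral {s..t} Hf"
  proof (rule integral_le)
    show "(\<lambda>_. \<eta> * (A/2) powr l / 2) integrable_on {s..t}" by (rule integrable_const_ivl)
    show "Hf integrable_on {s..t}" using Hf_int[of s t] st eps by simp
    fix r assume "r \<in> {s..t}"
    then have r: "s \<le> r" "r \<le> t" by auto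
    have A2: "0 < A/2" using A M1pos by simp
    have "(A/2) powr l / 2 \<le> v a r powr l / 2"
      using b[OF r] A2 l_pos by (simp add: powr_mono2)
    also have "\<dots> \<le> f (v a r)" using f_lower[of "v a r"] b[OF r] A by simp
    finally have fr: "(A/2) powr l / 2 \<le> f (v a r)" .
    have "\<eta> * ((A/2) powr l / 2) \<le> h r * f (v a r)"
      using b[OF r] fr eta by (intro mult_mono) auto
    then show "\<eta> * (A/2) powr l / 2 \<le> Hf r" by (simp add: Hf_def)
  qed
  then show ?thesis using G_diff[of s t] st eps by (simp add: mult_ac)
qed

lemma A_large:
  assumes s1: "0 < s1" "v a s1 = \<beta>" "a powr (p-1) \<le> G s1" "s1 \<le> y" "y \<le> \<epsilon>"
    and Gn: "\<And>t. s1 \<le> t \<Longrightarrow> t \<le> y \<Longrightarrow> 0 \<le> G t"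
    and alt: "G y < a powr (p-1)/2 \<or> \<epsilon>/4 \<le> y - s1"
  shows "Astar \<le> v a y"
proof (rule ccontr)
  assume "\<not> ?thesis"
  then have small: "v a y < Astar" by simp
  note mu = mono_up[OF s1(1) s1(4) s1(5) s1(2) Gn]
  show False
  proof (cases "G y < a powr (p-1)/2")
    case True
    define K where "K = 2 * Astar powr l + Cf"
    have "integral {s1..y} Hf \<le> integral {s1..y} (\<lambda>r. K * C1 * r powr e1)"
    proof (rule integral_le)
      show "Hf integrable_on {s1..y}" using Hf_int[of s1 y] s1 eps by simp
      have "((\<lambda>r. r powr e1) has_integral (y powr (e1+1) - s1 powr (e1+1)) / (e1+1)) {s1..y}"
        using int_powr[OF s1(1) s1(4) e1] .
      then have "(\<lambda>r. r powr e1) integrable_on {s1..y}" by blast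
      then show "(\<lambda>r. K * C1 * r powr e1) integrable_on {s1..y}"
        using integrable_on_cmult_left[of "\<lambda>r. r powr e1" "{s1..y}" "K * C1"] by simp
      fix r assume "r \<in> {s1..y}"
      then have r: "s1 \<le> r" "r \<le> y" by auto
      have vr: "\<beta> \<le> v a r" "v a r \<le> v a y" using mu(1)[of r y] mu(2)[of r] r by auto
      have "f (v a r) \<le> 2 * v a r powr l + Cf" using f_upper vr by simp
      also have "\<dots> \<le> K" unfolding K_def
        using vr small bpos l_pos by (auto intro!: powr_mono2)
      finally have fK: "f (v a r) \<le> K" .
      have hr: "h r \<le> C1 * r powr e1" "0 \<le> h r" using hup[of r] hpos[of r] r s1 eps by auto
      have "h r * f (v a r) \<le> (C1 * r powr e1) * K"
        using hr fK f_nonneg[of "v a r"] vr by (intro mult_mono) auto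
      then show "Hf r \<le> K * C1 * r powr e1" by (simp add: Hf_def mult_ac)
    qed
    also have "\<dots> = K * C1 * ((y powr (e1+1) - s1 powr (e1+1)) / (e1+1))"
      using integral_unique[OF int_powr[OF s1(1) s1(4) e1]] by simp
    also have "\<dots> \<le> K * C1 * (T powr (e1+1) / (e1+1))"
    proof -
      have K0: "0 \<le> K" unfolding K_def using Cf0 by simp
      have "y powr (e1+1) \<le> T powr (e1+1)" using s1 eps e1 by (intro powr_mono2) auto
      then have "(y powr (e1+1) - s1 powr (e1+1)) / (e1+1) \<le> T powr (e1+1) / (e1+1)"
        using e1 by (intro divide_right_mono) (auto intro: order_trans[of _ "y powr (e1+1)"])
      then show ?thesis using K0 C1pos by (intro mult_left_mono) auto
    qed
    finally have "integral {s1..y} Hf \<le> K * (C1 * T powr (e1+1) / (e1+1))" by simp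
    moreover have "integral {s1..y} Hf = G s1 - G y" using G_diff[of s1 y] s1 eps by simp
    ultimately have "G s1 - G y \<le> (2 * Astar powr l + Cf) * (C1 * T powr (e1+1) / (e1+1))"
      unfolding K_def by simp
    then show False using True s1(3) a3 by linarith
  next
    case False
    with alt have far: "\<epsilon>/4 \<le> y - s1" by simp
    have "psi p (a powr (p-1)/2) * (y - s1) \<le> v a y - v a s1"
    proof (rule MV_lo)
      show "0 \<le> s1" "s1 \<le> y" "y \<le> T" using s1 eps by auto
      fix r assume r: "s1 \<le> r" "r \<le> y"
      have "a powr (p-1)/2 \<le> G r" using False mu(3)[of r y] r by simp
      then have "psi p (a powr (p-1)/2) \<le> psi p (G r)" by (rule psi_mono[OF p1])
      then show "psi p (a powr (p-1)/2) \<le> dv r" using dv_psi[of r] r s1 eps by simp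
    qed
    moreover have "0 \<le> psi p (a powr (p-1)/2)" by (simp add: psi_nonneg)
    ultimately have "psi p (a powr (p-1)/2) * (\<epsilon>/4) \<le> v a y - v a s1"
      using far by (meson mult_left_mono order_trans)
    then have "Astar \<le> v a y - \<beta>" using a2 s1 by (simp add: mult.commute)
    then show False using small bpos by simp
  qed
qed

lemma descent:
  assumes tb: "0 < tb" "tb \<le> 5*\<epsilon>/8" "v a tb = \<beta>" and AA: "Astar \<le> A"
    and bnd: "(h tb * (A/2) powr l / 2 * A / 2) powr ((p-1)/p) \<le> - G tb"
  shows False
proof -
  define e where "e = 1/(p-1)"
  have e0: "0 < e" using p1 by (simp add: e_def)
  define \<eta> where "\<eta> = h tb"
  have tbe: "tb < \<epsilon>" using tb eps by simp
  have etac: "h \<epsilon> \<le> \<eta>" using h_ge_c[of tb] tb tbe by (simp add: \<eta>_def)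
  have eta0: "0 < \<eta>" using c_pos etac by simp
  have A2: "0 < A/2" "2*\<beta> \<le> A" using R1[OF AA] bpos by auto
  define X where "X = \<eta> * (A/2) powr l / 2 * A / 2"
  have X0: "0 < X" using eta0 A2 by (simp add: X_def)
  define g0 where "g0 = - G tb"
  have g0X: "X powr ((p-1)/p) \<le> g0" using bnd by (simp add: X_def g0_def \<eta>_def)
  have g0p: "0 < g0" using g0X X0 by (smt (verit) powr_gt_zero)
  define w where "w = (g0/2) powr e"
  have w0: "0 < w" using g0p by (simp add: w_def)
  have psiw: "psi p (- (g0/2)) = - w" using g0p by (simp add: psi_nonpos w_def e_def)
  have dvle: "dv r \<le> - w" if "0 \<le> r" "r \<le> T" "G r \<le> - (g0/2)" for r
    using dv_psi[of r] that psi_mono[OF p1 that(3)] psiw by simp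
  show False
  proof (cases "\<exists>t\<in>{tb..\<epsilon>}. - (g0/2) \<le> G t")
    case False
    then have Gl: "\<And>t. tb \<le> t \<Longrightarrow> t \<le> \<epsilon> \<Longrightarrow> G t \<le> - (g0/2)" by (auto simp: not_le less_imp_le)
    have "v a \<epsilon> - v a tb \<le> (- w) * (\<epsilon> - tb)"
    proof (rule MV_up)
      show "0 \<le> tb" "tb \<le> \<epsilon>" "\<epsilon> \<le> T" using tb tbe eps by auto
      fix r assume r: "tb \<le> r" "r \<le> \<epsilon>"
      show "dv r \<le> - w" by (rule dvle) (use r tb eps Gl[OF r] in auto)
    qed
    then have "w * (\<epsilon> - tb) < \<beta>" using pos[of \<epsilon>] eps tb by simp
    moreover
    define w2 where "w2 = ((((h \<epsilon> * (A/2) powr l / 2) * A / 2) powr ((p-1)/p)) / 2) powr (1/(p-1))"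
    have w2p: "0 < w2" using c_pos A2 by (simp add: w2_def)
    have "w2 \<le> w"
    proof -
      have "(h \<epsilon> * (A/2) powr l / 2) * A / 2 \<le> X"
        unfolding X_def using etac A2 by (simp add: mult_right_mono divide_right_mono)
      then have "((h \<epsilon> * (A/2) powr l / 2) * A / 2) powr ((p-1)/p) \<le> X powr ((p-1)/p)"
        using c_pos A2 p1 by (intro powr_mono2) auto
      then have "((h \<epsilon> * (A/2) powr l / 2) * A / 2) powr ((p-1)/p) / 2 \<le> g0/2" using g0X by simp
      then show ?thesis unfolding w2_def w_def e_def using p1 by (intro powr_mono2) auto
    qed
    have "\<beta> / w2 \<le> 3*\<epsilon>/8" using R3[OF AA] by (simp add: w2_def)
    then have "\<beta> \<le> 3*\<epsilon>/8 * w2" using w2p by (simp add: field_simps)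
    also have "\<dots> \<le> (\<epsilon> - tb) * w" using \<open>w2 \<le> w\<close> tb w2p eps by (intro mult_mono) auto
    ultimately show False by (simp add: mult.commute)
  next
    case True
    obtain t2 where t2: "tb \<le> t2" "t2 \<le> \<epsilon>" "- (g0/2) \<le> G t2"
      and bef: "\<And>t. tb \<le> t \<and> t < t2 \<longrightarrow> G t < - (g0/2)"
      using first_ge[OF _ G_cont_sub True] tbe eps tb by auto
    have ne: "t2 \<noteq> tb" using t2(3) g0p by (auto simp: g0_def)
    then have tt: "tb < t2" using t2 by simp
    have "G t2 \<le> - (g0/2)"
      by (rule cont_left_le[OF tt G_cont_sub]) (use bef tb eps t2 in \<open>auto intro: less_imp_le\<close>)
    then have Gt2: "G t2 = - (g0/2)" using t2 by simp
    have Gle: "G r \<le> - (g0/2)" if "tb \<le> r" "r \<le> t2" for r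
      using bef[of r] Gt2 that by (cases "r = t2") auto
    define \<nu> where "\<nu> = v a t2"
    have nu: "0 < \<nu>" using pos[of t2] t2 tb by (simp add: \<nu>_def)
    have vlow: "\<nu> + w * (t2 - r) \<le> v a r" if "tb \<le> r" "r \<le> t2" for r
    proof -
      have "v a t2 - v a r \<le> (- w) * (t2 - r)"
      proof (rule MV_up)
        show "0 \<le> r" "r \<le> t2" "t2 \<le> T" using that tb t2 eps by auto
        fix r' assume r': "r \<le> r'" "r' \<le> t2"
        show "dv r' \<le> - w" by (rule dvle) (use r' that tb t2 eps Gle[of r'] in auto)
      qed
      then show ?thesis by (simp add: \<nu>_def algebra_simps)
    qed
    have vhi: "v a r \<le> \<beta>" if "tb \<le> r" "r \<le> t2" for r
    proof -
      have "v a r - v a tb \<le> (- w) * (r - tb)"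
      proof (rule MV_up)
        show "0 \<le> tb" "tb \<le> r" "r \<le> T" using that tb t2 eps by auto
        fix r' assume r': "tb \<le> r'" "r' \<le> r"
        show "dv r' \<le> - w" by (rule dvle) (use r' that tb t2 eps Gle[of r'] in auto)
      qed
      moreover have "0 \<le> w * (r - tb)" using w0 that by simp
      ultimately show ?thesis using tb by simp
    qed
    have span: "\<nu> + w * (t2 - tb) \<le> \<beta>" using vlow[of tb] tt tb by simp
    define J1 where "J1 = ((\<nu> + w * (t2 - tb)) powr (1-m) - \<nu> powr (1-m)) / (w * (1-m))"
    have I1: "((\<lambda>r. (\<nu> + w * (t2 - r)) powr (-m)) has_integral J1) {tb..t2}"
      unfolding J1_def by (rule int_descent[OF nu w0 _ m01(2)]) (use tt in simp)
    have I2: "((\<lambda>r. \<eta> * Cm * (\<nu> + w * (t2 - r)) powr (-m) + \<eta> * Cm) has_integral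
               (\<eta> * Cm * J1 + (t2 - tb) * (\<eta> * Cm))) {tb..t2}"
    proof (rule has_integral_add)
      show "((\<lambda>r. \<eta> * Cm * (\<nu> + w * (t2 - r)) powr (-m)) has_integral \<eta> * Cm * J1) {tb..t2}"
        using has_integral_mult_right[OF I1, of "\<eta> * Cm"] by simp
      show "((\<lambda>r. \<eta> * Cm) has_integral (t2 - tb) * (\<eta> * Cm)) {tb..t2}"
        using has_integral_const_real[of "\<eta> * Cm" tb t2] tt by simp
    qed
    have "integral {tb..t2} (\<lambda>r. - Hf r) \<le> integral {tb..t2} (\<lambda>r. \<eta> * Cm * (\<nu> + w * (t2 - r)) powr (-m) + \<eta> * Cm)"
    proof (rule integral_le)
      show "(\<lambda>r. - Hf r) integrable_on {tb..t2}"
        using Hf_int[of tb t2] tb tt t2 eps by (simp add: integrable_neg)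
      show "(\<lambda>r. \<eta> * Cm * (\<nu> + w * (t2 - r)) powr (-m) + \<eta> * Cm) integrable_on {tb..t2}"
        using I2 by blast
      fix r assume "r \<in> {tb..t2}"
      then have r: "tb \<le> r" "r \<le> t2" by auto
      have vr: "0 < v a r" "v a r \<le> \<beta>" using pos[of r] vhi[OF r] r tb t2 by auto
      have base: "0 < \<nu> + w * (t2 - r)" using nu w0 r by (simp add: add_pos_nonneg)
      have "- f (v a r) \<le> Cm * v a r powr (-m) + Cm" using f_small vr by simp
      also have "\<dots> \<le> Cm * (\<nu> + w * (t2 - r)) powr (-m) + Cm"
        using powr_mono2'[of "-m" "\<nu> + w * (t2 - r)" "v a r"] m01 base vlow[OF r] Cm0
        by (simp add: mult_left_mono)
      finally have fb: "- f (v a r) \<le> Cm * (\<nu> + w * (t2 - r)) powr (-m) + Cm" .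
      have f0: "0 \<le> - f (v a r)" using fle0 vr by simp
      have hr: "h r \<le> \<eta>" "0 \<le> h r" using h_mono[of tb r] hpos[of r] r tb t2 eps by (auto simp: \<eta>_def)
      have "h r * (- f (v a r)) \<le> \<eta> * (Cm * (\<nu> + w * (t2 - r)) powr (-m) + Cm)"
        using hr fb f0 eta0 by (intro mult_mono) auto
      then show "- Hf r \<le> \<eta> * Cm * (\<nu> + w * (t2 - r)) powr (-m) + \<eta> * Cm"
        by (simp add: Hf_def algebra_simps)
    qed
    also have "\<dots> = \<eta> * Cm * J1 + (t2 - tb) * (\<eta> * Cm)" using integral_unique[OF I2] .
    finally have bound1: "integral {tb..t2} (\<lambda>r. - Hf r) \<le> \<eta> * Cm * J1 + (t2 - tb) * (\<eta> * Cm)" .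
    have "integral {tb..t2} (\<lambda>r. - Hf r) = - integral {tb..t2} Hf" by (rule integral_neg)
    also have "\<dots> = G t2 - G tb" using G_diff[of tb t2] tb tt t2 eps by simp
    also have "\<dots> = g0/2" using Gt2 by (simp add: g0_def)
    finally have g0eq: "integral {tb..t2} (\<lambda>r. - Hf r) = g0/2" .
    have J1b: "J1 \<le> \<beta> powr (1-m) / (w * (1-m))"
    proof -
      have "(\<nu> + w * (t2 - tb)) powr (1-m) \<le> \<beta> powr (1-m)"
        using span nu w0 tt m01 by (intro powr_mono2) (auto simp: add_pos_nonneg less_imp_le)
      moreover have "0 \<le> \<nu> powr (1-m)" by simp
      ultimately have "(\<nu> + w * (t2 - tb)) powr (1-m) - \<nu> powr (1-m) \<le> \<beta> powr (1-m)" by linarith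
      then show ?thesis unfolding J1_def using w0 m01 by (intro divide_right_mono) auto
    qed
    have tspan: "t2 - tb \<le> \<beta> / w" using span nu w0 by (simp add: field_simps)
    define C' where "C' = Cm * (\<beta> powr (1-m)/(1-m) + \<beta>)"
    have "g0/2 \<le> \<eta> * Cm * (\<beta> powr (1-m) / (w * (1-m))) + (\<beta> / w) * (\<eta> * Cm)"
    proof -
      have "\<eta> * Cm * J1 \<le> \<eta> * Cm * (\<beta> powr (1-m) / (w * (1-m)))"
        using J1b eta0 Cm0 by (intro mult_left_mono) auto
      moreover have "(t2 - tb) * (\<eta> * Cm) \<le> (\<beta> / w) * (\<eta> * Cm)"
        using tspan eta0 Cm0 by (intro mult_right_mono) auto
      ultimately show ?thesis using bound1 g0eq by linarith
    qed
    also have "\<dots> = \<eta> * C' / w" unfolding C'_def using w0 m01 by (simp add: field_simps)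
    finally have F1: "g0/2 * w \<le> \<eta> * C'" using w0 by (simp add: field_simps)
    have F2: "g0/2 * w = (g0/2) powr (1 + e)"
      using g0p by (simp add: w_def powr_add)
    have F3: "(g0/2) powr (1 + e) = g0 powr (1 + e) / 2 powr (1 + e)"
      using g0p by (simp add: powr_divide)
    have F4: "X \<le> g0 powr (1 + e)"
    proof -
      have "X = (X powr ((p-1)/p)) powr (1 + e)"
        using X0 p1 by (simp add: powr_powr e_def field_simps)
      also have "\<dots> \<le> g0 powr (1 + e)" using g0X e0 X0 by (intro powr_mono2) auto
      finally show ?thesis .
    qed
    have F5: "X / 2 powr (1 + e) \<le> g0 powr (1 + e) / 2 powr (1 + e)"
      by (rule divide_right_mono[OF F4]) simp
    have "X / 2 powr (1 + e) \<le> \<eta> * C'" using F1 F2 F3 F5 by linarith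
    then have "X \<le> \<eta> * C' * 2 powr (1 + e)" by (simp add: field_simps)
    then have "\<eta> * ((A/2) powr l / 2 * A) \<le> \<eta> * (2 powr (2 + e) * C')"
    proof -
      have p2: "2 powr (2 + e) = 2 * 2 powr (1 + e)"
        using powr_add[of "2::real" 1 "1 + e"] by (simp add: add.assoc[symmetric])
      have "\<eta> * ((A/2) powr l / 2 * A) = 2 * X" by (simp add: X_def)
      also have "\<dots> \<le> 2 * (\<eta> * C' * 2 powr (1 + e))" using \<open>X \<le> \<eta> * C' * 2 powr (1 + e)\<close> by simp
      also have "\<dots> = \<eta> * (2 powr (2 + e) * C')" using p2 by simp
      finally show ?thesis .
    qed
    then have "(A/2) powr l / 2 * A \<le> 2 powr (2 + e) * C'" using eta0 by simp
    then show False using R4[OF AA] by (simp add: C'_def e_def)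
  qed
qed

lemma run_False: False
proof -
  obtain s1 where s1: "0 < s1" "s1 \<le> \<epsilon>/4" "v a s1 = \<beta>" "a powr (p-1) \<le> G s1"
    using phase0 by blast
  have Gs1: "0 < G s1" using s1(4) apos by (smt (verit) powr_gt_zero)
  define \<kappa> where "\<kappa> A = h \<epsilon> * (A/2) powr l / 2" for A
  have kpos: "0 < \<kappa> A" if "0 < A" for A using c_pos that by (simp add: \<kappa>_def)
  show False
  proof (cases "\<exists>t\<in>{s1..\<epsilon>/2}. G t \<le> 0")
    case False
    then have Gp: "\<And>t. s1 \<le> t \<Longrightarrow> t \<le> \<epsilon>/2 \<Longrightarrow> 0 < G t" by (auto simp: not_le)
    have y: "s1 \<le> \<epsilon>/2" "\<epsilon>/2 \<le> \<epsilon>" using s1 eps by auto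
    have Gn: "\<And>t. s1 \<le> t \<Longrightarrow> t \<le> \<epsilon>/2 \<Longrightarrow> 0 \<le> G t" using Gp less_imp_le by blast
    note mu = mono_up[OF s1(1) y(1) y(2) s1(3) Gn]
    define A where "A = v a (\<epsilon>/2)"
    have alt: "G (\<epsilon>/2) < a powr (p-1)/2 \<or> \<epsilon>/4 \<le> \<epsilon>/2 - s1" using s1(2) by linarith
    have AA: "Astar \<le> A" unfolding A_def
      by (rule A_large[OF s1(1) s1(3) s1(4) y(1) y(2) Gn alt])
    have A0: "0 < A" "2*M1 \<le> A" using R1[OF AA] bpos by auto
    have "(\<forall>t. s1 \<le> t \<longrightarrow> t \<le> \<epsilon>/2 \<longrightarrow> v a t \<le> A/2 \<longrightarrow> (\<kappa> A*A/2) powr ((p-1)/p) \<le> G t)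
         \<and> \<epsilon>/2 - s1 \<le> Theta p A (\<kappa> A)"
    proof (rule rising[of p s1 "\<epsilon>/2" "\<kappa> A" A G "v a"])
      show "1 < p" "s1 \<le> \<epsilon>/2" "0 < \<kappa> A" "0 < A" using p1 y kpos A0 by auto
      show "G t \<le> G s" if "s1 \<le> s" "s \<le> t" "t \<le> \<epsilon>/2" for s t using mu(3) that by simp
      show "0 \<le> G t" if "s1 \<le> t" "t \<le> \<epsilon>/2" for t using Gn that by simp
      show "(t - s) * G t powr (1/(p-1)) \<le> v a t - v a s \<and> v a t - v a s \<le> (t - s) * G s powr (1/(p-1))"
        if "s1 \<le> s" "s \<le> t" "t \<le> \<epsilon>/2" for s t
        by (rule rise_mvt) (use that s1 eps mu(3) Gn in auto)
      show "\<kappa> A * (t - s) \<le> G s - G t" if "s1 \<le> s" "s \<le> t" "t \<le> \<epsilon>/2" "A/2 \<le> v a s" for s t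
        unfolding \<kappa>_def
      proof (rule drop_gen)
        show "0 < s" "s \<le> t" "t \<le> \<epsilon>" "0 \<le> h \<epsilon>" "2*M1 \<le> A" using that s1 eps c_pos A0 by auto
        fix r assume "s \<le> r" "r \<le> t"
        then show "h \<epsilon> \<le> h r \<and> A/2 \<le> v a r"
          using h_ge_c[of r] mu(1)[of s r] that s1 eps by auto
      qed
      show "0 \<le> v a s1" "v a (\<epsilon>/2) = A" using s1 bpos by (auto simp: A_def)
      show "continuous_on {s1..\<epsilon>/2} (v a)" using v_cont_sub s1 eps by simp
    qed
    then have "\<epsilon>/2 - s1 \<le> \<epsilon>/8" using R2[OF AA] by (simp add: \<kappa>_def)
    then show False using s1 eps by simp
  next
    case True
    obtain u where u: "s1 \<le> u" "u \<le> \<epsilon>/2" "G u \<le> 0" and befu: "\<And>t. s1 \<le> t \<and> t < u \<longrightarrow> 0 < G t"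
      using first_le[OF _ G_cont_sub True] s1 eps by auto
    have us1: "s1 < u" using u Gs1 by (cases "s1 = u") auto
    have "0 \<le> G u"
      by (rule cont_left_ge[OF us1 G_cont_sub]) (use befu s1 eps u in \<open>auto intro: less_imp_le\<close>)
    then have Gu: "G u = 0" using u by simp
    have Gn: "\<And>t. s1 \<le> t \<Longrightarrow> t \<le> u \<Longrightarrow> 0 \<le> G t"
      using befu Gu by (metis order_le_less less_imp_le)
    have ue: "u \<le> \<epsilon>" using u eps by simp
    note mu = mono_up[OF s1(1) u(1) ue s1(3) Gn]
    define A where "A = v a u"
    have alt: "G u < a powr (p-1)/2 \<or> \<epsilon>/4 \<le> u - s1" using Gu apos by simp
    have AA: "Astar \<le> A" unfolding A_def
      by (rule A_large[OF s1(1) s1(3) s1(4) u(1) ue Gn alt])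
    have A0: "0 < A" "2*M1 \<le> A" "2*\<beta> \<le> A" using R1[OF AA] bpos by auto
    have u0: "0 < u" using s1 u by simp
    have fall_gen: "(\<forall>t. u \<le> t \<longrightarrow> t \<le> y \<longrightarrow> v a t \<le> A/2 \<longrightarrow> (\<kappa>' *A/2) powr ((p-1)/p) \<le> - G t)
         \<and> y - u \<le> Theta p A \<kappa>'"
      if y: "u \<le> y" "y \<le> \<epsilon>" and vb: "\<And>t. u \<le> t \<Longrightarrow> t \<le> y \<Longrightarrow> \<beta> \<le> v a t"
        and kap: "\<kappa>' = \<eta> * (A/2) powr l / 2" and eta: "0 < \<eta>" "\<And>r. u \<le> r \<Longrightarrow> r \<le> y \<Longrightarrow> \<eta> \<le> h r"
      for y \<eta> \<kappa>'
    proof -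
      have Ga: "G t \<le> G s" if "u \<le> s" "s \<le> t" "t \<le> y" for s t
        by (rule G_anti) (use that u0 y eps vb in auto)
      have Gnp: "G t \<le> 0" if "u \<le> t" "t \<le> y" for t using Ga[of u t] that Gu by simp
      have fm: "- ((t - s) * (- G t) powr (1/(p-1))) \<le> v a t - v a s \<and> v a t - v a s \<le> - ((t - s) * (- G s) powr (1/(p-1)))"
        if "u \<le> s" "s \<le> t" "t \<le> y" for s t
        by (rule fall_mvt) (use that u0 y eps Ga Gnp in auto)
      have vdec: "v a t \<le> v a s" if "u \<le> s" "s \<le> t" "t \<le> y" for s t
      proof -
        have "0 \<le> (t - s) * (- G s) powr (1/(p-1))" using that by simp
        then show ?thesis using fm[OF that] by simp
      qed
      show ?thesis
      proof (rule falling[of p u y \<kappa>' A G "v a"])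
        show "1 < p" "u \<le> y" "0 < A" using p1 y A0 by auto
        show "0 < \<kappa>'" unfolding kap using eta A0 by simp
        show "G t \<le> G s" if "u \<le> s" "s \<le> t" "t \<le> y" for s t using Ga that by simp
        show "G t \<le> 0" if "u \<le> t" "t \<le> y" for t using Gnp that by simp
        show "- ((t - s) * (- G t) powr (1/(p-1))) \<le> v a t - v a s \<and> v a t - v a s \<le> - ((t - s) * (- G s) powr (1/(p-1)))"
          if "u \<le> s" "s \<le> t" "t \<le> y" for s t using fm that by simp
        show "\<kappa>' * (t - s) \<le> G s - G t" if "u \<le> s" "s \<le> t" "t \<le> y" "A/2 \<le> v a t" for s t
          unfolding kap
        proof (rule drop_gen)
          show "0 < s" "s \<le> t" "t \<le> \<epsilon>" "0 \<le> \<eta>" "2*M1 \<le> A" using that u0 y eta A0 by auto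
          fix r assume "s \<le> r" "r \<le> t"
          then show "\<eta> \<le> h r \<and> A/2 \<le> v a r"
            using eta(2)[of r] vdec[of r t] that by auto
        qed
        show "v a u = A" "0 \<le> v a y" using A_def vb[of y] y bpos by auto
        show "continuous_on {u..y} (v a)" using v_cont_sub u0 y eps by simp
      qed
    qed
    show False
    proof (cases "\<exists>t\<in>{u..\<epsilon>}. v a t \<le> \<beta>")
      case False
      then have vb: "\<And>t. u \<le> t \<Longrightarrow> t \<le> \<epsilon> \<Longrightarrow> \<beta> \<le> v a t" by (auto simp: not_le less_imp_le)
      have "\<epsilon> - u \<le> Theta p A (\<kappa> A)"
        using fall_gen[OF ue order_refl vb _ c_pos, of "\<kappa> A"] h_ge_c u0 by (auto simp: \<kappa>_def)
      then have "\<epsilon> - u \<le> \<epsilon>/8" using R2[OF AA] by (simp add: \<kappa>_def)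
      then show False using u eps by simp
    next
      case True
      obtain tb where tb: "u \<le> tb" "tb \<le> \<epsilon>" "v a tb \<le> \<beta>" and beft: "\<And>t. u \<le> t \<and> t < tb \<longrightarrow> \<beta> < v a t"
        using first_le[OF _ v_cont_sub True] ue u0 eps by auto
      have utb: "u < tb" using tb A0 bpos by (cases "u = tb") (auto simp: A_def)
      have "\<beta> \<le> v a tb"
        by (rule cont_left_ge[OF utb v_cont_sub]) (use beft u0 tb eps in \<open>auto intro: less_imp_le\<close>)
      then have vtb: "v a tb = \<beta>" using tb by simp
      have vb: "\<And>t. u \<le> t \<Longrightarrow> t \<le> tb \<Longrightarrow> \<beta> \<le> v a t"
        using beft vtb by (metis order_le_less less_imp_le)
      have F1: "tb - u \<le> Theta p A (\<kappa> A)"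
        using fall_gen[OF tb(1) tb(2) vb _ c_pos, of "\<kappa> A"] h_ge_c u0 tb by (auto simp: \<kappa>_def)
      then have "tb - u \<le> \<epsilon>/8" using R2[OF AA] by (simp add: \<kappa>_def)
      then have late: "tb \<le> 5*\<epsilon>/8" using u by simp
      have etap: "0 < h tb" using hpos[of tb] u0 utb tb eps by simp
      have F2: "((h tb * (A/2) powr l / 2) * A/2) powr ((p-1)/p) \<le> - G tb"
        using fall_gen[OF tb(1) tb(2) vb refl etap] h_mono[of _ tb] u0 tb vtb A0 by auto
      show False
        by (rule descent[OF _ late vtb AA]) (use F2 u0 utb in auto)
    qed
  qed
qed

end

lemma theta_eq:
  fixes p l c A :: real
  assumes p: "1 < p" and c: "0 < c" and A: "0 < A"
  shows "Theta p A (c * (A/2) powr l / 2) = 3 * (c/2) powr (-1/p) * (A/2) powr ((p-1-l)/p)"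
proof -
  define B where "B = A/2"
  define K where "K = c/2"
  have B: "0 < B" and K: "0 < K" using A c by (auto simp: B_def K_def)
  have k: "c * (A/2) powr l / 2 = K * B powr l" by (simp add: B_def K_def)
  have kA: "K * B powr l * A / 2 = K * B powr (l+1)"
    using B by (simp add: B_def powr_add)
  have t1: "B / (K * B powr (l+1)) powr (1/p) = K powr (-1/p) * B powr ((p-1-l)/p)"
  proof -
    have "(K * B powr (l+1)) powr (1/p) = K powr (1/p) * B powr ((l+1)/p)"
      using K B by (simp add: powr_mult powr_powr)
    moreover have "B = B powr 1" using B by simp
    moreover have "B powr 1 / (K powr (1/p) * B powr ((l+1)/p)) = K powr (-1/p) * B powr (1 - (l+1)/p)"
      using K B by (simp add: powr_diff powr_minus_divide divide_inverse powr_minus)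
    moreover have "1 - (l+1)/p = (p-1-l)/p" using p by (simp add: field_simps)
    ultimately show ?thesis by simp
  qed
  have t2: "(B / (K * B powr l) powr (1/(p-1))) powr ((p-1)/p) = K powr (-1/p) * B powr ((p-1-l)/p)"
  proof -
    have "(K * B powr l) powr (1/(p-1)) = K powr (1/(p-1)) * B powr (l/(p-1))"
      using K B by (simp add: powr_mult powr_powr)
    then have "B / (K * B powr l) powr (1/(p-1)) = K powr (-1/(p-1)) * B powr (1 - l/(p-1))"
      using K B by (simp add: powr_diff powr_minus_divide divide_inverse powr_minus)
    then have e1: "(B / (K * B powr l) powr (1/(p-1))) powr ((p-1)/p)
        = K powr (-1/(p-1) * ((p-1)/p)) * B powr ((1 - l/(p-1)) * ((p-1)/p))"
      using K B by (simp add: powr_mult powr_powr)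
    have e2: "-1/(p-1) * ((p-1)/p) = -1/p" using p by (simp add: field_simps)
    have e3: "(1 - l/(p-1)) * ((p-1)/p) = (p-1-l)/p" using p by (simp add: field_simps)
    show ?thesis using e1 unfolding e2 e3 .
  qed
  have "Theta p A (c * (A/2) powr l / 2) = B / (K * B powr l * A / 2) powr (1/p)
        + 2 * (B / (K * B powr l) powr (1/(p-1))) powr ((p-1)/p)"
    unfolding Theta_def k by (simp add: B_def)
  also have "\<dots> = 3 * K powr (-1/p) * B powr ((p-1-l)/p)" unfolding kA t1 t2 by simp
  finally show ?thesis by (simp add: B_def K_def)
qed

lemma den_eq:
  fixes p l c A :: real
  assumes p: "1 < p" and c: "0 < c" and A: "0 < A"
  shows "((((c * (A/2) powr l / 2) * A / 2) powr ((p-1)/p)) / 2) powr (1/(p-1))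
         = (c/2) powr (1/p) * (A/2) powr ((l+1)/p) / 2 powr (1/(p-1))"
proof -
  define B where "B = A/2"
  define K where "K = c/2"
  have B: "0 < B" and K: "0 < K" using A c by (auto simp: B_def K_def)
  have kA: "(c * (A/2) powr l / 2) * A / 2 = K * B powr (l+1)"
    using B by (simp add: B_def K_def powr_add)
  have e1: "((K * B powr (l+1)) powr ((p-1)/p) / 2) powr (1/(p-1))
       = (K powr ((p-1)/p * (1/(p-1))) * B powr ((l+1) * ((p-1)/p) * (1/(p-1)))) / 2 powr (1/(p-1))"
    using K B by (simp add: powr_mult powr_powr powr_divide)
  have e2: "(p-1)/p * (1/(p-1)) = 1/p" using p by (simp add: field_simps)
  have e3: "(l+1) * ((p-1)/p) * (1/(p-1)) = (l+1)/p" using p by (simp add: field_simps)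
  have main: "((K * B powr (l+1)) powr ((p-1)/p) / 2) powr (1/(p-1))
       = K powr (1/p) * B powr ((l+1)/p) / 2 powr (1/(p-1))" using e1 unfolding e2 e3 .
  have "((((c * (A/2) powr l / 2) * A / 2) powr ((p-1)/p)) / 2) powr (1/(p-1))
     = ((K * B powr (l+1)) powr ((p-1)/p) / 2) powr (1/(p-1))" by (simp only: kA)
  also have "\<dots> = K powr (1/p) * B powr ((l+1)/p) / 2 powr (1/(p-1))" by (rule main)
  finally show ?thesis by (simp only: K_def B_def)

qed

context core
begin

lemma req_eventually:
  fixes \<epsilon> c :: real
  assumes eps: "0 < \<epsilon>" and c: "0 < c"
  shows "\<exists>Astar. \<forall>A\<ge>Astar. (2*M1 \<le> A \<and> 2*\<beta> \<le> A)
     \<and> Theta p A (c * (A/2) powr l / 2) \<le> \<epsilon>/8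
     \<and> \<beta> / ((((c * (A/2) powr l / 2) * A / 2) powr ((p-1)/p)) / 2) powr (1/(p-1)) \<le> 3*\<epsilon>/8
     \<and> 2 powr (2 + 1/(p-1)) * (Cm * (\<beta> powr (1-m)/(1-m) + \<beta>)) < (A/2) powr l / 2 * A"
proof -
  have lp: "0 < l" using lpos p1 by simp
  have lim2: "filterlim (\<lambda>A::real. A/2) at_top at_top" by real_asymp
  have ev0: "eventually (\<lambda>A::real. 0 < A) at_top" by (rule eventually_gt_at_top)
  have evR1: "eventually (\<lambda>A::real. 2*M1 \<le> A \<and> 2*\<beta> \<le> A) at_top"
    using eventually_ge_at_top[of "max (2*M1) (2*\<beta>)"] by eventually_elim auto
  define \<gamma> where "\<gamma> = (p-1-l)/p"
  have g: "\<gamma> < 0" using lpos p1 by (simp add: \<gamma>_def divide_neg_pos)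
  have T2: "((\<lambda>A. 3 * (c/2) powr (-1/p) * (A/2) powr \<gamma>) \<longlongrightarrow> 0) at_top"
    by (rule tendsto_mult_right_zero[OF tendsto_neg_powr[OF g lim2]])
  have evR2: "eventually (\<lambda>A. Theta p A (c * (A/2) powr l / 2) \<le> \<epsilon>/8) at_top"
  proof -
    have "eventually (\<lambda>A. 3 * (c/2) powr (-1/p) * (A/2) powr \<gamma> < \<epsilon>/8) at_top"
      using order_tendstoD(2)[OF T2, of "\<epsilon>/8"] eps by fastforce
    then show ?thesis using ev0
      by eventually_elim (use theta_eq[OF p1 c] in \<open>simp add: \<gamma>_def\<close>)
  qed
  define K3 where "K3 = \<beta> * 2 powr (1/(p-1)) / (c/2) powr (1/p)"
  have T3: "((\<lambda>A. K3 * (A/2) powr (- ((l+1)/p))) \<longlongrightarrow> 0) at_top"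
    by (rule tendsto_mult_right_zero[OF tendsto_neg_powr[OF _ lim2]]) (use lp p1 in simp)
  have evR3: "eventually (\<lambda>A. \<beta> / ((((c * (A/2) powr l / 2) * A / 2) powr ((p-1)/p)) / 2) powr (1/(p-1)) \<le> 3*\<epsilon>/8) at_top"
  proof -
    have "eventually (\<lambda>A. K3 * (A/2) powr (- ((l+1)/p)) < 3*\<epsilon>/8) at_top"
      using order_tendstoD(2)[OF T3, of "3*\<epsilon>/8"] eps by fastforce
    then show ?thesis using ev0
    proof eventually_elim
      case (elim A)
      have "\<beta> / ((((c * (A/2) powr l / 2) * A / 2) powr ((p-1)/p)) / 2) powr (1/(p-1))
          = \<beta> / ((c/2) powr (1/p) * (A/2) powr ((l+1)/p) / 2 powr (1/(p-1)))"
        using den_eq[OF p1 c elim(2)] by simp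
      also have "\<dots> = K3 * (A/2) powr (- ((l+1)/p))"
        unfolding K3_def using elim(2) c by (simp add: powr_minus field_simps)
      finally show ?case using elim(1) by simp
    qed
  qed
  define K4 where "K4 = 2 powr (2 + 1/(p-1)) * (Cm * (\<beta> powr (1-m)/(1-m) + \<beta>))"
  have evR4: "eventually (\<lambda>A. K4 < (A/2) powr l / 2 * A) at_top"
    using eventually_ge_at_top[of "max 2 (2 * (\<bar>K4\<bar> + 1))"]
  proof eventually_elim
    case (elim A)
    then have A: "1 \<le> A/2" "\<bar>K4\<bar> + 1 \<le> A/2" by auto
    have "(A/2) powr l / 2 * A = (A/2) powr l * (A/2) powr 1" using A by simp
    also have "\<dots> = (A/2) powr (l + 1)" by (simp add: powr_add)
    also have "\<dots> \<ge> (A/2) powr 1" using A lp by (intro powr_mono) auto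
    finally have "(A/2) powr 1 \<le> (A/2) powr l / 2 * A" .
    moreover have "(A/2) powr 1 = A/2" using A by simp
    ultimately show ?case using A by linarith
  qed
  have "eventually (\<lambda>A. (2*M1 \<le> A \<and> 2*\<beta> \<le> A)
     \<and> Theta p A (c * (A/2) powr l / 2) \<le> \<epsilon>/8
     \<and> \<beta> / ((((c * (A/2) powr l / 2) * A / 2) powr ((p-1)/p)) / 2) powr (1/(p-1)) \<le> 3*\<epsilon>/8
     \<and> 2 powr (2 + 1/(p-1)) * (Cm * (\<beta> powr (1-m)/(1-m) + \<beta>)) < (A/2) powr l / 2 * A) at_top"
    using evR1 evR2 evR3 evR4 unfolding K4_def by eventually_elim auto
  then show ?thesis by (simp add: eventually_at_top_linorder)
qed

end

context core
begin

lemma key: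
  assumes eps: "0 < \<epsilon>" "\<epsilon> < T"
  shows "\<exists>a0>0. \<forall>a\<ge>a0. \<exists>t. 0 < t \<and> t \<le> \<epsilon> \<and> v a t \<le> 0"
proof -
  define c where "c = h \<epsilon>"
  have c: "0 < c" using hpos eps by (simp add: c_def)
  obtain Astar where AS: "\<And>A. Astar \<le> A \<Longrightarrow> (2*M1 \<le> A \<and> 2*\<beta> \<le> A)
     \<and> Theta p A (c * (A/2) powr l / 2) \<le> \<epsilon>/8
     \<and> \<beta> / ((((c * (A/2) powr l / 2) * A / 2) powr ((p-1)/p)) / 2) powr (1/(p-1)) \<le> 3*\<epsilon>/8
     \<and> 2 powr (2 + 1/(p-1)) * (Cm * (\<beta> powr (1-m)/(1-m) + \<beta>)) < (A/2) powr l / 2 * A"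
    using req_eventually[OF eps(1) c] by blast
  define Hb where "Hb = C1 * T powr (e1+1) / (e1+1)"
  define X where "X = (2 * Astar powr l + Cf) * Hb"
  define a0 where "a0 = max (max 1 (4*\<beta>/\<epsilon>)) (max (4 * \<bar>Astar\<bar> * 2 powr (1/(p-1)) / \<epsilon>) ((2 * \<bar>X\<bar> + 1) powr (1/(p-1))))"
  have a0: "0 < a0" by (simp add: a0_def)
  have "\<exists>t. 0 < t \<and> t \<le> \<epsilon> \<and> v a t \<le> 0" if a: "a0 \<le> a" for a
  proof (rule ccontr)
    assume "\<not> ?thesis"
    then have pos: "\<And>t. 0 < t \<Longrightarrow> t \<le> \<epsilon> \<Longrightarrow> 0 < v a t" by (auto simp: not_le)
    have apos: "0 < a" using a a0 by simp
    obtain dv where dv: "continuous_on {0..T} dv"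
        "\<forall>t\<in>{0..T}. (v a has_real_derivative dv t) (at t within {0..T})"
        "v a 0 = 0"
        "\<forall>t\<in>{0..T}. (\<lambda>s. h s * f (v a s)) integrable_on {0..t} \<and>
           \<bar>dv t\<bar> powr (p - 2) * dv t = a powr (p - 1) - integral {0..t} (\<lambda>s. h s * f (v a s))"
      using sol[OF apos] unfolding is_sol_def by blast
    have a1: "4*\<beta>/\<epsilon> \<le> a" using a by (simp add: a0_def)
    have a2: "Astar \<le> (\<epsilon>/4) * psi p (a powr (p-1) / 2)"
    proof -
      have "psi p (a powr (p-1) / 2) = (a powr (p-1) / 2) powr (1/(p-1))" by (simp add: psi_nonneg)
      also have "\<dots> = a / 2 powr (1/(p-1))" using apos p1 by (simp add: powr_divide powr_powr)
      finally have ps: "psi p (a powr (p-1) / 2) = a / 2 powr (1/(p-1))" .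
      have "4 * \<bar>Astar\<bar> * 2 powr (1/(p-1)) / \<epsilon> \<le> a" using a by (simp add: a0_def)
      then have "4 * \<bar>Astar\<bar> * 2 powr (1/(p-1)) \<le> a * \<epsilon>" using eps by (simp add: field_simps)
      then have "\<bar>Astar\<bar> \<le> (\<epsilon>/4) * (a / 2 powr (1/(p-1)))" by (simp add: field_simps)
      then show ?thesis using ps by simp
    qed
    have a3: "(2 * Astar powr l + Cf) * (C1 * T powr (e1+1) / (e1+1)) < a powr (p-1) / 2"
    proof -
      have "(2 * \<bar>X\<bar> + 1) powr (1/(p-1)) \<le> a" using a by (simp add: a0_def)
      then have "((2 * \<bar>X\<bar> + 1) powr (1/(p-1))) powr (p-1) \<le> a powr (p-1)"
        using p1 by (intro powr_mono2) auto
      moreover have "((2 * \<bar>X\<bar> + 1) powr (1/(p-1))) powr (p-1) = 2 * \<bar>X\<bar> + 1"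
        using p1 by (simp add: powr_powr)
      ultimately have "2 * \<bar>X\<bar> + 1 \<le> a powr (p-1)" by simp
      then show ?thesis unfolding X_def[symmetric] Hb_def[symmetric] by linarith
    qed
    interpret r: run p \<beta> l m M1 Cf Cm C1 e1 T f h v a dv \<epsilon> Astar
    proof (unfold_locales)
      show "0 < a" by (rule apos)
      show "continuous_on {0..T} dv" by (rule dv(1))
      show "\<And>t. t \<in> {0..T} \<Longrightarrow> (v a has_real_derivative dv t) (at t within {0..T})" using dv(2) by blast
      show "v a 0 = 0" by (rule dv(3))
      show "\<And>t. t \<in> {0..T} \<Longrightarrow> (\<lambda>s. h s * f (v a s)) integrable_on {0..t}" using dv(4) by blast
      show "\<And>t. t \<in> {0..T} \<Longrightarrow> \<bar>dv t\<bar> powr (p - 2) * dv t = a powr (p - 1) - integral {0..t} (\<lambda>s. h s * f (v a s))"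
        using dv(4) by blast
      show "0 < \<epsilon>" "\<epsilon> < T" by (rule eps(1), rule eps(2))
      show "\<And>t. 0 < t \<Longrightarrow> t \<le> \<epsilon> \<Longrightarrow> 0 < v a t" by (rule pos)
      show "\<And>A. Astar \<le> A \<Longrightarrow> 2*M1 \<le> A \<and> 2*\<beta> \<le> A" using AS by blast
      show "\<And>A. Astar \<le> A \<Longrightarrow> Theta p A (h \<epsilon> * (A/2) powr l / 2) \<le> \<epsilon>/8" using AS c_def by blast
      show "\<And>A. Astar \<le> A \<Longrightarrow>
       \<beta> / ((((h \<epsilon> * (A/2) powr l / 2) * A / 2) powr ((p-1)/p)) / 2) powr (1/(p-1)) \<le> 3*\<epsilon>/8"
        using AS c_def by blast
      show "\<And>A. Astar \<le> A \<Longrightarrow>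
       2 powr (2 + 1/(p-1)) * (Cm * (\<beta> powr (1-m)/(1-m) + \<beta>)) < (A/2) powr l / 2 * A" using AS by blast
      show "4*\<beta>/\<epsilon> \<le> a" by (rule a1)
      show "Astar \<le> (\<epsilon>/4) * psi p (a powr (p-1) / 2)" by (rule a2)
      show "(2 * Astar powr l + Cf) * (C1 * T powr (e1+1) / (e1+1)) < a powr (p-1) / 2" by (rule a3)
    qed
    show False by (rule r.run_False)
  qed
  then show ?thesis using a0 by blast
qed

lemma near0_cont:
  assumes apos: "0 < a"
  shows "(\<exists>\<delta>>0. \<delta> \<le> T \<and> (\<forall>t. 0 < t \<and> t \<le> \<delta> \<longrightarrow> 0 < v a t)) \<and> continuous_on {0..T} (v a)"
proof -
  obtain dv where dv: "continuous_on {0..T} dv"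
      "\<forall>t\<in>{0..T}. (v a has_real_derivative dv t) (at t within {0..T})"
      "v a 0 = 0"
      "\<forall>t\<in>{0..T}. (\<lambda>s. h s * f (v a s)) integrable_on {0..t} \<and>
         \<bar>dv t\<bar> powr (p - 2) * dv t = a powr (p - 1) - integral {0..t} (\<lambda>s. h s * f (v a s))"
    using sol[OF apos] unfolding is_sol_def by blast
  interpret tr: traj p \<beta> l m M1 Cf Cm C1 e1 T f h v a dv
  proof (unfold_locales)
    show "0 < a" by (rule apos)
    show "continuous_on {0..T} dv" by (rule dv(1))
    show "\<And>t. t \<in> {0..T} \<Longrightarrow> (v a has_real_derivative dv t) (at t within {0..T})" using dv(2) by blast
    show "v a 0 = 0" by (rule dv(3))
    show "\<And>t. t \<in> {0..T} \<Longrightarrow> (\<lambda>s. h s * f (v a s)) integrable_on {0..t}" using dv(4) by blast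
    show "\<And>t. t \<in> {0..T} \<Longrightarrow> \<bar>dv t\<bar> powr (p - 2) * dv t = a powr (p - 1) - integral {0..t} (\<lambda>s. h s * f (v a s))"
      using dv(4) by blast
  qed
  show ?thesis using tr.v_pos_near0 tr.v_cont by blast
qed

lemma first_zero:
  assumes apos: "0 < a" and t0: "0 < t0" "t0 < T" "v a t0 \<le> 0"
  shows "\<exists>\<tau>. 0 < \<tau> \<and> \<tau> \<le> t0 \<and> v a \<tau> = 0 \<and> (\<forall>t. 0 < t \<and> t < \<tau> \<longrightarrow> 0 < v a t)"
proof -
  obtain \<delta> where d: "0 < \<delta>" "\<delta> \<le> T" "\<And>t. 0 < t \<Longrightarrow> t \<le> \<delta> \<Longrightarrow> 0 < v a t"
    and vc: "continuous_on {0..T} (v a)" using near0_cont[OF apos] by blast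
  have dt: "\<delta> < t0" using d(3)[of t0] t0 by (cases "t0 \<le> \<delta>") auto
  have vc': "continuous_on {\<delta>..t0} (v a)" by (rule continuous_on_subset[OF vc]) (use d t0 in auto)
  obtain \<tau> where tau: "\<delta> \<le> \<tau>" "\<tau> \<le> t0" "v a \<tau> \<le> 0" and bef: "\<And>t. \<delta> \<le> t \<and> t < \<tau> \<longrightarrow> 0 < v a t"
  proof -
    have ex: "\<exists>t\<in>{\<delta>..t0}. v a t \<le> 0" using t0 dt by auto
    show ?thesis using first_le[OF less_imp_le[OF dt] vc' ex] that by blast
  qed
  have vd: "0 < v a \<delta>" using d by simp
  have dtau: "\<delta> < \<tau>" using tau vd by (cases "\<delta> = \<tau>") auto
  have vc'': "continuous_on {\<delta>..\<tau>} (v a)" by (rule continuous_on_subset[OF vc]) (use d t0 tau in auto)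
  have "0 \<le> v a \<tau>" by (rule cont_left_ge[OF dtau vc'']) (use bef in \<open>auto intro: less_imp_le\<close>)
  then have "v a \<tau> = 0" using tau by simp
  moreover have "0 < v a t" if "0 < t" "t < \<tau>" for t
    using d(3)[of t] bef[of t] that by (cases "t \<le> \<delta>") auto
  ultimately show ?thesis using tau d by (intro exI[of _ \<tau>]) auto
qed

lemma final:
  "\<exists>A>0. \<exists>z :: real \<Rightarrow> real.
     (\<forall>a\<ge>A. 0 < z a \<and> z a < T \<and> v a (z a) = 0 \<and> (\<forall>t. 0 < t \<and> t < z a \<longrightarrow> v a t > 0)) \<and>
     (z \<longlongrightarrow> 0) at_top"
proof -
  define P where "P a \<tau> \<longleftrightarrow> 0 < \<tau> \<and> \<tau> < T \<and> v a \<tau> = 0 \<and> (\<forall>t. 0 < t \<and> t < \<tau> \<longrightarrow> 0 < v a t)" for a \<tau>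
  define z where "z a = (SOME \<tau>. P a \<tau>)" for a
  have zle: "P a (z a) \<and> z a \<le> t0" if hyp: "0 < a" "0 < t0" "t0 < T" "v a t0 \<le> 0" for a t0
  proof -
    obtain \<tau> where tau: "0 < \<tau>" "\<tau> \<le> t0" "v a \<tau> = 0" "\<forall>t. 0 < t \<and> t < \<tau> \<longrightarrow> 0 < v a t"
      using first_zero[OF hyp] by blast
    have "P a \<tau>" using tau hyp by (simp add: P_def)
    then have Pz: "P a (z a)" unfolding z_def by (rule someI)
    have "z a \<le> t0"
    proof (rule ccontr)
      assume "\<not> z a \<le> t0"
      then have "0 < v a t0" using Pz hyp by (auto simp: P_def)
      then show False using hyp by simp
    qed
    then show ?thesis using Pz by simp
  qed
  have T2: "0 < T/2" "T/2 < T" using Tpos by auto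
  obtain A0 where A0: "0 < A0" "\<And>a. A0 \<le> a \<Longrightarrow> \<exists>t. 0 < t \<and> t \<le> T/2 \<and> v a t \<le> 0"
    using key[OF T2] by blast
  have good: "P a (z a)" if hyp: "A0 \<le> a" for a
  proof -
    obtain t where "0 < t" "t \<le> T/2" "v a t \<le> 0" using A0(2)[OF hyp] by blast
    then show ?thesis using zle[of a t] hyp A0 Tpos by auto
  qed
  have lim: "(z \<longlongrightarrow> 0) at_top"
  proof (rule order_tendstoI)
    fix e :: real assume e: "e < 0"
    show "eventually (\<lambda>a. e < z a) at_top"
      using eventually_ge_at_top[of A0]
    proof eventually_elim
      case (elim a)
      then show ?case using good[OF elim] e by (simp add: P_def)
    qed
  next
    fix e :: real assume e: "0 < e"
    define \<epsilon> where "\<epsilon> = min (e/2) (T/2)"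
    have eps: "0 < \<epsilon>" "\<epsilon> < T" using e Tpos by (auto simp: \<epsilon>_def)
    obtain a1 where a1: "0 < a1" "\<And>a. a1 \<le> a \<Longrightarrow> \<exists>t. 0 < t \<and> t \<le> \<epsilon> \<and> v a t \<le> 0"
      using key[OF eps] by blast
    show "eventually (\<lambda>a. z a < e) at_top"
      using eventually_ge_at_top[of "max A0 a1"]
    proof eventually_elim
      case (elim a)
      obtain t where t: "0 < t" "t \<le> \<epsilon>" "v a t \<le> 0" using a1(2)[of a] elim by auto
      have "z a \<le> t" using zle[of a t] t eps elim A0 by auto
      then show ?case using t e by (simp add: \<epsilon>_def)
    qed
  qed
  show ?thesis using A0(1) good lim by (intro exI[of _ A0] exI[of _ z]) (auto simp: P_def)
qed

end

lemma lip_isCont: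
  assumes lip: "loc_lipschitz_on S g" and S: "open S" and x: "x \<in> S"
  shows "isCont g x"
proof -
  obtain e L where e: "e > 0" and L: "L-lipschitz_on (cball x e \<inter> S) g"
    using lip x unfolding loc_lipschitz_on_def by blast
  have "continuous_on (cball x e \<inter> S) g" by (rule lipschitz_on_continuous_on[OF L])
  then have c: "continuous_on (ball x e \<inter> S) g" by (rule continuous_on_subset) auto
  have "open (ball x e \<inter> S)" using S by auto
  moreover have "x \<in> ball x e \<inter> S" using e x by auto
  ultimately show ?thesis using c continuous_on_eq_continuous_at by blast
qed

lemma bounded_Icc:
  fixes g :: "real \<Rightarrow> real"
  assumes c: "\<And>x. a \<le> x \<Longrightarrow> x \<le> b \<Longrightarrow> isCont g x"
  shows "\<exists>B. \<forall>x\<in>{a..b}. \<bar>g x\<bar> \<le> B"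
proof -
  have "continuous_on {a..b} g" by (intro continuous_at_imp_continuous_on) (use c in auto)
  then have "compact (g ` {a..b})" by (rule compact_continuous_image) simp
  then have "bounded (g ` {a..b})" by (rule compact_imp_bounded)
  then obtain B where "\<forall>y\<in>g ` {a..b}. norm y \<le> B" unfolding bounded_iff by blast
  then show ?thesis by auto
qed

lemma f_large:
  fixes f g1 :: "real \<Rightarrow> real" and l :: real
  assumes H1_eq: "\<exists>M. \<forall>u. \<bar>u\<bar> \<ge> M \<longrightarrow> f u = \<bar>u\<bar> powr (l - 1) * u + g1 u"
    and H1_lim: "((\<lambda>u. \<bar>g1 u\<bar> / \<bar>u\<bar> powr l) \<longlongrightarrow> 0) at_top"
  shows "\<exists>M1>0. \<forall>x\<ge>M1. x powr l / 2 \<le> f x \<and> f x \<le> 2 * x powr l"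
proof -
  obtain M where M: "\<And>u. \<bar>u\<bar> \<ge> M \<Longrightarrow> f u = \<bar>u\<bar> powr (l - 1) * u + g1 u" using H1_eq by blast
  have "eventually (\<lambda>u. \<bar>g1 u\<bar> / \<bar>u\<bar> powr l < 1/2) at_top"
    using order_tendstoD(2)[OF H1_lim, of "1/2"] by simp
  then obtain N1 where N1: "\<And>u. u \<ge> N1 \<Longrightarrow> \<bar>g1 u\<bar> / \<bar>u\<bar> powr l < 1/2"
    unfolding eventually_at_top_linorder by blast
  define M1 where "M1 = max (max M N1) 1"
  have "x powr l / 2 \<le> f x \<and> f x \<le> 2 * x powr l" if x: "x \<ge> M1" for x
  proof -
    have xp: "0 < x" using x by (simp add: M1_def)
    have fx: "f x = x powr l + g1 x"
    proof -
      have "f x = x powr (l - 1) * x powr 1 + g1 x" using M[of x] x xp by (simp add: M1_def)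
      also have "x powr (l - 1) * x powr 1 = x powr (l - 1 + 1)" by (rule powr_add[symmetric])
      finally show ?thesis by simp
    qed
    have "\<bar>g1 x\<bar> / x powr l < 1/2" using N1[of x] x xp by (simp add: M1_def)
    then have "\<bar>g1 x\<bar> < x powr l / 2" using xp by (simp add: field_simps)
    then show ?thesis using fx by (simp add: abs_less_iff) (smt (verit) powr_ge_zero)
  qed
  moreover have "0 < M1" by (simp add: M1_def)
  ultimately show ?thesis by blast
qed

lemma T_basic:
  fixes n p R :: real
  assumes p: "1 < p" "p < n" and R: "0 < R"
  shows "0 < T_of n p R"
    and "T_of n p R powr ((p-1)/(p-n)) = R"
    and "\<And>t. 0 < t \<Longrightarrow> t \<le> T_of n p R \<Longrightarrow> R \<le> t powr ((p-1)/(p-n))"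
    and "\<And>t. 0 < t \<Longrightarrow> t < T_of n p R \<Longrightarrow> R < t powr ((p-1)/(p-n))"
proof -
  show T0: "0 < T_of n p R" using R by (simp add: T_of_def)
  have nz: "p - n \<noteq> 0" "p - 1 \<noteq> 0" using p by auto
  have e: "(p - n) / (p - 1) * ((p - 1) / (p - n)) = 1" using nz by simp
  show TR: "T_of n p R powr ((p-1)/(p-n)) = R"
    using R nz by (simp add: T_of_def powr_powr e)
  have j: "(p-1)/(p-n) < 0" using p by (simp add: divide_pos_neg)
  show "R \<le> t powr ((p-1)/(p-n))" if "0 < t" "t \<le> T_of n p R" for t
    using powr_mono2'[of "(p-1)/(p-n)" t "T_of n p R"] that j TR by simp
  show "R < t powr ((p-1)/(p-n))" if "0 < t" "t < T_of n p R" for t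
    using powr_less_mono2_neg[of "(p-1)/(p-n)" t "T_of n p R"] that j TR by simp
qed

lemma h_zero: "h_of n p K 0 = 0" by (simp add: h_of_def)

lemma h_pos:
  fixes n p R :: real
  assumes p: "1 < p" "p < n" and R: "0 < R" and K_pos: "\<forall>r\<ge>R. K r > 0"
    and t: "0 < t" "t \<le> T_of n p R"
  shows "0 < h_of n p K t"
proof -
  have "R \<le> t powr ((p-1)/(p-n))" using T_basic(3)[OF p R t] .
  then have "0 < K (t powr ((p-1)/(p-n)))" using K_pos by simp
  then show ?thesis using p t by (simp add: h_of_def)
qed

lemma h_up:
  fixes n p R K1 \<alpha> \<alpha>1 K0 :: real
  assumes p: "1 < p" "p < n" and R: "0 < R"
    and K_bounds: "\<forall>r\<ge>R. K0 / r powr \<alpha> \<le> K r \<and> K r \<le> K1 / r powr \<alpha>1"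
    and t: "0 < t" "t \<le> T_of n p R"
  shows "h_of n p K t \<le> (((n - p)/(p - 1)) powr (-p) * K1) * t powr (p*(n-1)/(p-n) - (p-1)/(p-n) * \<alpha>1)"
proof -
  define j where "j = (p-1)/(p-n)"
  define k where "k = p*(n-1)/(p-n)"
  define C0 where "C0 = ((n - p)/(p - 1)) powr (-p)"
  have C0: "0 < C0" using p by (simp add: C0_def)
  have r: "R \<le> t powr j" using T_basic(3)[OF p R t] by (simp add: j_def)
  have "K (t powr j) \<le> K1 / (t powr j) powr \<alpha>1" using K_bounds r by simp
  also have "\<dots> = K1 / t powr (j * \<alpha>1)" by (simp add: powr_powr)
  finally have Kb: "K (t powr j) \<le> K1 / t powr (j * \<alpha>1)" .
  have "h_of n p K t = C0 * t powr k * K (t powr j)" by (simp add: h_of_def C0_def k_def j_def)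
  also have "\<dots> \<le> C0 * t powr k * (K1 / t powr (j * \<alpha>1))"
    using Kb C0 by (intro mult_left_mono) auto
  also have "\<dots> = (C0 * K1) * (t powr k / t powr (j * \<alpha>1))" by simp
  also have "t powr k / t powr (j * \<alpha>1) = t powr (k - j * \<alpha>1)" using t by (simp add: powr_diff)
  finally show ?thesis by (simp add: C0_def k_def j_def)
qed

lemma e1_gt:
  fixes n p \<alpha>1 :: real
  assumes p: "1 < p" "p < n" and a: "n < \<alpha>1"
  shows "-1 < p*(n-1)/(p-n) - (p-1)/(p-n) * \<alpha>1"
proof -
  have eq: "p*(n-1)/(p-n) - (p-1)/(p-n) * \<alpha>1 = (p*(n-1) - (p-1)*\<alpha>1)/(p-n)"
  proof -
    have "(p-1)/(p-n) * \<alpha>1 = ((p-1) * \<alpha>1)/(p-n)" by simp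
    then show ?thesis by (simp add: diff_divide_distrib)
  qed
  have "(p-1)*n < (p-1)*\<alpha>1" using p a by simp
  then have hz: "p*(n-1) - (p-1)*\<alpha>1 < n - p" by (simp add: algebra_simps)
  have "-1 < (p*(n-1) - (p-1)*\<alpha>1)/(p-n)" using hz p by (simp add: less_divide_eq)
  then show ?thesis using eq by simp
qed

lemma h_anti:
  fixes N :: nat and p R :: real and K K' :: "real \<Rightarrow> real"
  assumes p: "1 < p" "p < real N" and R: "0 < R"
    and K_deriv: "\<forall>r\<ge>R. (K has_real_derivative K' r) (at r within {R..})"
    and K_pos: "\<forall>r\<ge>R. K r > 0"
    and K_ratio: "\<forall>r\<ge>R. r * K' r / K r > - ((real N - 1) * p / (p - 1))"
    and st: "0 < s" "s \<le> t" "t < T_of (real N) p R"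
  shows "h_of (real N) p K t \<le> h_of (real N) p K s"
proof -
  define n where "n = real N"
  define j where "j = (p-1)/(p-n)"
  define k where "k = p*(n-1)/(p-n)"
  define C0 where "C0 = ((n - p)/(p - 1)) powr (-p)"
  have pn: "p < n" using p by (simp add: n_def)
  have C0: "0 < C0" using p pn by (simp add: C0_def)
  have j0: "j < 0" using p pn by (simp add: j_def divide_pos_neg)
  have nz: "p - n \<noteq> 0" "p - 1 \<noteq> 0" using p pn by auto
  have jk: "j * ((n - 1) * p / (p - 1)) = k" using nz by (simp add: j_def k_def divide_simps)
  have hdef: "h_of (real N) p K = (\<lambda>x. C0 * x powr k * K (x powr j))"
    by (simp add: h_of_def C0_def k_def j_def n_def fun_eq_iff)
  have der: "\<exists>y. ((\<lambda>x. C0 * x powr k * K (x powr j)) has_real_derivative y) (at x) \<and> y \<le> 0"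
    if x: "s \<le> x" "x \<le> t" for x
  proof -
    have x0: "0 < x" and xT: "x < T_of n p R" using x st by (auto simp: n_def)
    define r where "r = x powr j"
    have rR: "R < r" using T_basic(4)[OF p(1) pn R x0 xT] by (simp add: r_def j_def)
    have Kd: "(K has_real_derivative K' r) (at r)"
    proof -
      have "(K has_real_derivative K' r) (at r within {R..})" using K_deriv rR by simp
      moreover have "at r within {R..} = at r" by (rule at_within_open_subset[of r "{R<..}"]) (use rR in auto)
      ultimately show ?thesis by simp
    qed
    have d1: "((\<lambda>x. x powr k) has_real_derivative k * x powr (k - 1)) (at x)"
      by (rule has_real_derivative_powr[OF x0])
    have d2: "((\<lambda>x. x powr j) has_real_derivative j * x powr (j - 1)) (at x)"
      by (rule has_real_derivative_powr[OF x0])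
    have d3: "((\<lambda>x. K (x powr j)) has_real_derivative K' r * (j * x powr (j - 1))) (at x)"
      using DERIV_chain2[OF Kd[unfolded r_def] d2] by (simp add: r_def)
    have d: "((\<lambda>x. C0 * x powr k * K (x powr j)) has_real_derivative
          C0 * (k * x powr (k - 1) * K r + x powr k * (K' r * (j * x powr (j - 1))))) (at x)"
    proof -
      have "((\<lambda>x. x powr k * K (x powr j)) has_real_derivative
          k * x powr (k - 1) * K (x powr j) + x powr k * (K' r * (j * x powr (j - 1)))) (at x)"
        using DERIV_mult[OF d1 d3] by (simp add: mult.commute)
      from DERIV_cmult[OF this, of C0] show ?thesis by (simp add: r_def mult.assoc)
    qed
    have split: "x powr k * (K' r * (j * x powr (j - 1))) = x powr (k - 1) * (j * r * K' r)"
    proof -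
      have "x powr k * x powr (j - 1) = x powr (k - 1) * x powr j"
        by (simp add: powr_add[symmetric] algebra_simps)
      then show ?thesis by (simp add: r_def mult_ac)
    qed
    have Kr: "0 < K r" using K_pos rR by simp
    have "- ((n - 1) * p / (p - 1)) < r * K' r / K r" using K_ratio rR by (simp add: n_def)
    then have rat: "- ((n - 1) * p / (p - 1)) * K r < r * K' r"
      using Kr by (simp only: less_divide_eq)
    have "j * (r * K' r) < j * (- ((n - 1) * p / (p - 1)) * K r)"
      using mult_strict_left_mono_neg[OF rat j0] by (simp add: mult.assoc)
    also have "\<dots> = - (j * ((n - 1) * p / (p - 1))) * K r" by (simp only: mult_minus_left mult_minus_right mult.assoc)
    also have "\<dots> = - k * K r" by (simp only: jk)
    finally have sg: "k * K r + j * r * K' r < 0" by (simp add: mult.assoc)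
    have "C0 * (k * x powr (k - 1) * K r + x powr k * (K' r * (j * x powr (j - 1))))
        = C0 * x powr (k - 1) * (k * K r + j * r * K' r)" using split by (simp add: algebra_simps)
    also have "\<dots> \<le> 0" using C0 sg by (intro mult_nonneg_nonpos) auto
    finally show ?thesis using d by blast
  qed
  have "(\<lambda>x. C0 * x powr k * K (x powr j)) t \<le> (\<lambda>x. C0 * x powr k * K (x powr j)) s"
    by (rule DERIV_nonpos_imp_nonincreasing[OF st(2)]) (use der in blast)
  then show ?thesis by (simp add: hdef)
qed

theorem lemma2p6:
  fixes N :: nat and p l m R \<beta> K0 K1 \<alpha> \<alpha>1 :: real
    and f g1 g2 K K' :: "real \<Rightarrow> real"
    and v :: "real \<Rightarrow> real \<Rightarrow> real"
  assumes N: "N > 2" and p: "1 < p" "p < real N"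
    \<comment> \<open>f odd and locally Lipschitz on R \ {0}\<close>
    and f_odd: "\<forall>u. u \<noteq> 0 \<longrightarrow> f (- u) = - f u"
    and f_lip: "loc_lipschitz_on (- {0}) f"
    \<comment> \<open>(H1)\<close>
    and H1_g1: "loc_lipschitz_on UNIV g1" and H1_l: "l > p - 1"
    and H1_eq: "\<exists>M. \<forall>u. \<bar>u\<bar> \<ge> M \<longrightarrow> f u = \<bar>u\<bar> powr (l - 1) * u + g1 u"
    and H1_lim: "((\<lambda>u. \<bar>g1 u\<bar> / \<bar>u\<bar> powr l) \<longlongrightarrow> 0) at_top"
    \<comment> \<open>(H2)\<close>
    and H2_g2: "loc_lipschitz_on UNIV g2" and H2_g20: "g2 0 = 0"
    and H2_m: "0 < m" "m < 1"
    and H2_eq: "\<exists>\<delta>>0. \<forall>u. u \<noteq> 0 \<and> \<bar>u\<bar> < \<delta> \<longrightarrow>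
                   f u = - 1 / (\<bar>u\<bar> powr (m - 1) * u) + g2 u"
    \<comment> \<open>(H3)\<close>
    and H3: "\<beta> > 0" "f \<beta> = 0" "\<forall>u. 0 < u \<and> u < \<beta> \<longrightarrow> f u < 0"
            "\<forall>u. u > \<beta> \<longrightarrow> f u > 0"
    \<comment> \<open>(H4)\<close>
    and R: "R > 0"
    and K_deriv: "\<forall>r\<ge>R. (K has_real_derivative K' r) (at r within {R..})"
    and K_cont: "continuous_on {R..} K" and K'_cont: "continuous_on {R..} K'"
    and K_pos: "\<forall>r\<ge>R. K r > 0"
    and K_ratio: "\<forall>r\<ge>R. r * K' r / K r > - ((real N - 1) * p / (p - 1))"
    and K01: "K0 > 0" "K1 > 0"
    and K_bounds: "\<forall>r\<ge>R. K0 / r powr \<alpha> \<le> K r \<and> K r \<le> K1 / r powr \<alpha>1"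
    and alphas: "real N + m * (real N - p) / (p - 1) < \<alpha>1" "\<alpha>1 \<le> \<alpha>" "\<alpha> < 2 * (real N - 1)"
    \<comment> \<open>v a is the (unique) solution on [0,T] with initial slope a\<close>
    and v_sol: "\<forall>a>0. is_sol p (h_of (real N) p K) f a (T_of (real N) p R) (v a)"
  shows "\<exists>A>0. \<exists>z :: real \<Rightarrow> real.
           (\<forall>a\<ge>A. 0 < z a \<and> z a < T_of (real N) p R \<and> v a (z a) = 0 \<and>
                   (\<forall>t. 0 < t \<and> t < z a \<longrightarrow> v a t > 0)) \<and>
           (z \<longlongrightarrow> 0) at_top"
proof -
  have fc: "isCont f x" if "x \<noteq> 0" for x
    by (rule lip_isCont[OF f_lip]) (use that in auto)
  have g2c: "isCont g2 x" for x by (rule lip_isCont[OF H2_g2]) auto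
  have bpos: "0 < \<beta>" using H3 by simp
  obtain M1 where M1: "0 < M1" "\<And>x. M1 \<le> x \<Longrightarrow> x powr l / 2 \<le> f x \<and> f x \<le> 2 * x powr l"
    using f_large[OF H1_eq H1_lim] by blast
  obtain B1 where B1: "\<forall>x\<in>{\<beta>..M1}. \<bar>f x\<bar> \<le> B1"
    using bounded_Icc[of \<beta> M1 f] fc bpos by force
  define Cf where "Cf = max B1 0"
  have f_upper: "f x \<le> 2 * x powr l + Cf" if "\<beta> \<le> x" for x
  proof (cases "M1 \<le> x")
    case True
    then show ?thesis using M1(2)[of x] by (simp add: Cf_def) (smt (verit))
  next
    case False
    then have "\<bar>f x\<bar> \<le> B1" using B1 that by simp
    then have "f x \<le> Cf" by (simp add: Cf_def)
    moreover have "0 \<le> 2 * x powr l" by simp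
    ultimately show ?thesis by linarith
  qed
  obtain \<delta> where dl: "\<delta> > 0" "\<And>u. u \<noteq> 0 \<Longrightarrow> \<bar>u\<bar> < \<delta> \<Longrightarrow> f u = - 1 / (\<bar>u\<bar> powr (m - 1) * u) + g2 u"
    using H2_eq by blast
  obtain Bg where Bg: "\<forall>x\<in>{0..\<delta>}. \<bar>g2 x\<bar> \<le> Bg" using bounded_Icc[of 0 \<delta> g2] g2c by blast
  obtain Bf where Bf: "\<forall>x\<in>{\<delta>..\<beta>}. \<bar>f x\<bar> \<le> Bf"
    using bounded_Icc[of \<delta> \<beta> f] fc dl(1) by force
  define Cm where "Cm = max 1 (max Bg Bf)"
  have Cm0: "0 \<le> Cm" by (simp add: Cm_def)
  have f_small: "- f x \<le> Cm * x powr (-m) + Cm" if x: "0 < x" "x \<le> \<beta>" for x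
  proof (cases "x < \<delta>")
    case True
    have "\<bar>x\<bar> powr (m - 1) * x = x powr (m - 1) * x powr 1" using x by simp
    also have "\<dots> = x powr (m - 1 + 1)" by (rule powr_add[symmetric])
    also have "\<dots> = x powr m" by simp
    finally have e: "\<bar>x\<bar> powr (m - 1) * x = x powr m" .
    have "f x = - (x powr (-m)) + g2 x" using dl(2)[of x] True x e by (simp add: powr_minus_divide)
    moreover have "\<bar>g2 x\<bar> \<le> Cm"
    proof -
      have "\<bar>g2 x\<bar> \<le> Bg" using Bg True x by simp
      then show ?thesis by (simp add: Cm_def)
    qed
    moreover have "x powr (-m) \<le> Cm * x powr (-m)"
      using mult_right_mono[of 1 Cm "x powr (-m)"] by (simp add: Cm_def)
    ultimately show ?thesis by linarith
  next
    case False
    then have "\<bar>f x\<bar> \<le> Bf" using Bf x by simp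
    then have "\<bar>f x\<bar> \<le> Cm" by (simp add: Cm_def)
    moreover have "0 \<le> Cm * x powr (-m)" using Cm0 by simp
    ultimately show ?thesis by linarith
  qed
  have pn: "p < real N" using p by simp
  have an: "real N < \<alpha>1"
  proof -
    have "0 < m * (real N - p) / (p - 1)" using H2_m p by simp
    then show ?thesis using alphas(1) by linarith
  qed
  interpret c: core p \<beta> l m M1 Cf Cm "((real N - p)/(p - 1)) powr (-p) * K1"
    "p*(real N-1)/(p-real N) - (p-1)/(p-real N) * \<alpha>1" "T_of (real N) p R" f "h_of (real N) p K" v
  proof (unfold_locales)
    show "1 < p" by (rule p(1))
    show "0 < T_of (real N) p R" using T_basic(1)[OF p(1) pn R] .
    show "0 < \<beta>" by (rule bpos)
    show "p - 1 < l" using H1_l by simp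
    show "0 < m" "m < 1" by (rule H2_m(1), rule H2_m(2))
    show "\<And>x. 0 < x \<Longrightarrow> x < \<beta> \<Longrightarrow> f x < 0" using H3 by blast
    show "\<And>x. \<beta> \<le> x \<Longrightarrow> 0 \<le> f x" using H3 by (metis less_eq_real_def order_refl)
    show "f \<beta> = 0" by (rule H3(2))
    show "0 < M1" by (rule M1(1))
    show "\<And>x. M1 \<le> x \<Longrightarrow> x powr l / 2 \<le> f x" using M1(2) by blast
    show "0 \<le> Cf" by (simp add: Cf_def)
    show "\<And>x. \<beta> \<le> x \<Longrightarrow> f x \<le> 2 * x powr l + Cf" by (rule f_upper)
    show "0 \<le> Cm" by (rule Cm0)
    show "\<And>x. 0 < x \<Longrightarrow> x \<le> \<beta> \<Longrightarrow> - f x \<le> Cm * x powr (-m) + Cm" by (rule f_small)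
    show "h_of (real N) p K 0 = 0" by (rule h_zero)
    show "\<And>t. 0 < t \<Longrightarrow> t \<le> T_of (real N) p R \<Longrightarrow> 0 < h_of (real N) p K t"
      by (rule h_pos[OF p(1) pn R K_pos])
    show "\<And>s t. 0 < s \<Longrightarrow> s \<le> t \<Longrightarrow> t < T_of (real N) p R \<Longrightarrow> h_of (real N) p K t \<le> h_of (real N) p K s"
      by (rule h_anti[OF p R K_deriv K_pos K_ratio])
    show "0 < ((real N - p)/(p - 1)) powr (-p) * K1" using K01 p by simp
    show "-1 < p*(real N-1)/(p-real N) - (p-1)/(p-real N) * \<alpha>1" by (rule e1_gt[OF p(1) pn an])
    show "\<And>t. 0 < t \<Longrightarrow> t \<le> T_of (real N) p R \<Longrightarrow>
      h_of (real N) p K t \<le> ((real N - p)/(p - 1)) powr (-p) * K1 * t powr (p*(real N-1)/(p-real N) - (p-1)/(p-real N) * \<alpha>1)"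
      by (rule h_up[OF p(1) pn R K_bounds])
    show "\<And>a. 0 < a \<Longrightarrow> is_sol p (h_of (real N) p K) f a (T_of (real N) p R) (v a)" using v_sol by blast
  qed
  show ?thesis by (rule c.final)
qed

end
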